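(* Let $\mathcal{T}_1,\mathcal{T}_2$ be locally finite trees and let $\Lambda$ be a simple group which is a uniform lattice in $\mathrm{Aut}(\mathcal{T}_1)\times\mathrm{Aut}(\mathcal{T}_2)$, and suppose $\Lambda\cong F_n\ast_{F_m}F_n$ is an amalgamated free product of free groups along embeddings $i,j:F_m\to F_n$. Let $p$ be a prime and let $A=\mathbb{Z}_p\rtimes F_n$ for a non-trivial action of $F_n$ on $\mathbb{Z}_p=\mathbb{Z}/p\mathbb{Z}$. Let $\Gamma=A\ast_{F_m}A$ be the amalgamated free product along the compositions $\tilde i,\tilde j:F_m\to F_n\hookrightarrow A$ of $i,j$ with the inclusion. Then $\Gamma$ is not virtually torsion-free. *)

theory Defs
  imports "HOL-Algebra.Algebra" "HOL-Analysis.Analysis"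
begin

text \<open>A letter is a generator with a sign (True = generator, False = its inverse).\<close>

definition cancels :: "('x \<times> bool) \<Rightarrow> ('x \<times> bool) \<Rightarrow> bool" where
  "cancels a b \<longleftrightarrow> fst a = fst b \<and> snd a \<noteq> snd b"

definition push_letter :: "('x \<times> bool) \<Rightarrow> ('x \<times> bool) list \<Rightarrow> ('x \<times> bool) list" where
  "push_letter a w = (case w of [] \<Rightarrow> [a] | b # r \<Rightarrow> (if cancels a b then r else a # w))"

definition reduce :: "('x \<times> bool) list \<Rightarrow> ('x \<times> bool) list" where
  "reduce w = foldr push_letter w []"

definition reduced :: "('x \<times> bool) list \<Rightarrow> bool" where
  "reduced w \<longleftrightarrow> (\<forall>i. Suc i < length w \<longrightarrow> \<not> cancels (w ! i) (w ! Suc i))"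

definition free_group :: "'x set \<Rightarrow> ('x \<times> bool) list monoid" where
  "free_group S = \<lparr> carrier = {w. fst ` set w \<subseteq> S \<and> reduced w},
                    monoid.mult = (\<lambda>u v. reduce (u @ v)),
                    monoid.one = [] \<rparr>"

abbreviation F :: "nat \<Rightarrow> (nat \<times> bool) list monoid" where
  "F n \<equiv> free_group {0..<n}"

definition normal_closure :: "('a, 'b) monoid_scheme \<Rightarrow> 'a set \<Rightarrow> 'a set" where
  "normal_closure G R = generate G (\<Union>g\<in>carrier G. \<Union>r\<in>R. {g \<otimes>\<^bsub>G\<^esub> r \<otimes>\<^bsub>G\<^esub> inv\<^bsub>G\<^esub> g})"

text \<open>The amalgamated free product \<open>A *_C B\<close> along \<open>f : C \<rightarrow> A\<close>, \<open>g : C \<rightarrow> B\<close>: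
  the free group on the disjoint union of the carriers of A and B modulo the
  multiplication tables of A and B and the identifications \<open>f c = g c\<close>.\<close>
definition amalg_relators ::
  "('a, 'm) monoid_scheme \<Rightarrow> ('b, 'n) monoid_scheme \<Rightarrow> ('c, 'k) monoid_scheme
   \<Rightarrow> ('c \<Rightarrow> 'a) \<Rightarrow> ('c \<Rightarrow> 'b) \<Rightarrow> (('a + 'b) \<times> bool) list set" where
  "amalg_relators A B C f g =
     {reduce [(Inl x, True), (Inl y, True), (Inl (x \<otimes>\<^bsub>A\<^esub> y), False)] | x y. x \<in> carrier A \<and> y \<in> carrier A}
   \<union> {reduce [(Inr x, True), (Inr y, True), (Inr (x \<otimes>\<^bsub>B\<^esub> y), False)] | x y. x \<in> carrier B \<and> y \<in> carrier B}
   \<union> {reduce [(Inl (f c), True), (Inr (g c), False)] | c. c \<in> carrier C}"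

definition amalgamated_product ::
  "('a, 'm) monoid_scheme \<Rightarrow> ('b, 'n) monoid_scheme \<Rightarrow> ('c, 'k) monoid_scheme
   \<Rightarrow> ('c \<Rightarrow> 'a) \<Rightarrow> ('c \<Rightarrow> 'b) \<Rightarrow> (('a + 'b) \<times> bool) list set monoid" where
  "amalgamated_product A B C f g =
     free_group (carrier A <+> carrier B)
       Mod normal_closure (free_group (carrier A <+> carrier B)) (amalg_relators A B C f g)"

definition cyclic_group :: "nat \<Rightarrow> nat monoid" where
  "cyclic_group p = \<lparr> carrier = {0..<p}, monoid.mult = (\<lambda>a b. (a + b) mod p), monoid.one = 0 \<rparr>"

definition semidirect_product ::
  "('n, 'a) monoid_scheme \<Rightarrow> ('h, 'b) monoid_scheme \<Rightarrow> ('h \<Rightarrow> 'n \<Rightarrow> 'n) \<Rightarrow> ('n \<times> 'h) monoid" where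
  "semidirect_product N H \<phi> = \<lparr> carrier = carrier N \<times> carrier H,
      monoid.mult = (\<lambda>(n1, h1) (n2, h2). (n1 \<otimes>\<^bsub>N\<^esub> \<phi> h1 n2, h1 \<otimes>\<^bsub>H\<^esub> h2)),
      monoid.one = (\<one>\<^bsub>N\<^esub>, \<one>\<^bsub>H\<^esub>) \<rparr>"

text \<open>Library \<open>simple_group\<close> requires \<open>order G > 1\<close>, which fails for infinite groups
  (card of an infinite set is 0); hence our own definition.\<close>
definition simple_grp :: "('a, 'b) monoid_scheme \<Rightarrow> bool" where
  "simple_grp G \<longleftrightarrow> group G \<and> carrier G \<noteq> {\<one>\<^bsub>G\<^esub>} \<and>
     (\<forall>H. H \<lhd> G \<longrightarrow> H = carrier G \<or> H = {\<one>\<^bsub>G\<^esub>})"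

definition torsion_free :: "('a, 'b) monoid_scheme \<Rightarrow> 'a set \<Rightarrow> bool" where
  "torsion_free G H \<longleftrightarrow> (\<forall>x\<in>H. \<forall>k::nat. k > 0 \<longrightarrow> x [^]\<^bsub>G\<^esub> k = \<one>\<^bsub>G\<^esub> \<longrightarrow> x = \<one>\<^bsub>G\<^esub>)"

definition virtually_torsion_free :: "('a, 'b) monoid_scheme \<Rightarrow> bool" where
  "virtually_torsion_free G \<longleftrightarrow>
     (\<exists>H. subgroup H G \<and> finite (rcosets\<^bsub>G\<^esub> H) \<and> torsion_free G H)"

definition walk :: "('v \<Rightarrow> 'v \<Rightarrow> bool) \<Rightarrow> 'v list \<Rightarrow> bool" where
  "walk E xs \<longleftrightarrow> (\<forall>i. Suc i < length xs \<longrightarrow> E (xs ! i) (xs ! Suc i))"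

definition is_tree :: "'v set \<Rightarrow> ('v \<Rightarrow> 'v \<Rightarrow> bool) \<Rightarrow> bool" where
  "is_tree V E \<longleftrightarrow> V \<noteq> {}
     \<and> (\<forall>u v. E u v \<longrightarrow> u \<in> V \<and> v \<in> V)
     \<and> (\<forall>u v. E u v \<longrightarrow> E v u)
     \<and> (\<forall>v. \<not> E v v)
     \<and> (\<forall>u\<in>V. \<forall>v\<in>V. \<exists>xs. xs \<noteq> [] \<and> hd xs = u \<and> last xs = v \<and> walk E xs)
     \<and> \<not> (\<exists>xs. length xs \<ge> 3 \<and> distinct xs \<and> walk E xs \<and> E (last xs) (hd xs))"

definition locally_finite :: "'v set \<Rightarrow> ('v \<Rightarrow> 'v \<Rightarrow> bool) \<Rightarrow> bool" where
  "locally_finite V E \<longleftrightarrow> (\<forall>v\<in>V. finite {u. E v u})"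

definition tree_aut :: "'v set \<Rightarrow> ('v \<Rightarrow> 'v \<Rightarrow> bool) \<Rightarrow> ('v \<Rightarrow> 'v) monoid" where
  "tree_aut V E = (BijGroup V) \<lparr> carrier := {f \<in> Bij V. \<forall>u\<in>V. \<forall>v\<in>V. E u v \<longleftrightarrow> E (f u) (f v)} \<rparr>"

text \<open>The standard (permutation / pointwise convergence) topology on \<open>Aut(T)\<close>.\<close>
definition tree_aut_topology :: "'v set \<Rightarrow> ('v \<Rightarrow> 'v \<Rightarrow> bool) \<Rightarrow> ('v \<Rightarrow> 'v) topology" where
  "tree_aut_topology V E =
     subtopology (product_topology (\<lambda>_. discrete_topology V) V) (carrier (tree_aut V E))"

text \<open>A uniform lattice in a topological group: a discrete cocompact subgroup.
  Cocompactness is expressed as \<open>G = K L\<close> for a compact \<open>K\<close>.\<close>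
definition uniform_lattice :: "('a, 'b) monoid_scheme \<Rightarrow> 'a topology \<Rightarrow> 'a set \<Rightarrow> bool" where
  "uniform_lattice G \<tau> L \<longleftrightarrow> subgroup L G
     \<and> subtopology \<tau> L = discrete_topology L
     \<and> (\<exists>K. compactin \<tau> K \<and> K <#>\<^bsub>G\<^esub> L = carrier G)"

end

theory Submission
  imports Defs
begin


definition inv_l :: "('x \<times> bool) \<Rightarrow> ('x \<times> bool)" where
  "inv_l a = (fst a, \<not> snd a)"

lemma cancels_iff: "cancels a b \<longleftrightarrow> b = inv_l a"
  by (cases a; cases b) (auto simp: cancels_def inv_l_def)

lemma inv_l_inv_l[simp]: "inv_l (inv_l a) = a"
  by (simp add: inv_l_def)

lemma reduce_Nil[simp]: "reduce [] = []"
  by (simp add: reduce_def)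

lemma reduce_Cons: "reduce (a # w) = push_letter a (reduce w)"
  by (simp add: reduce_def)

lemma reduce_append: "reduce (u @ v) = foldr push_letter u (reduce v)"
  by (simp add: reduce_def)

lemma reduced_Nil[simp]: "reduced []" and reduced_single[simp]: "reduced [a]"
  by (auto simp: reduced_def)

lemma reduced_Cons_Cons: "reduced (x # y # r) \<longleftrightarrow> \<not> cancels x y \<and> reduced (y # r)"
  apply (auto simp: reduced_def)
  subgoal for i by (cases i) auto
  done

lemma reduced_tl: "reduced (x # r) \<Longrightarrow> reduced r"
  by (cases r) (auto simp: reduced_Cons_Cons)

lemma reduced_push: "reduced w \<Longrightarrow> reduced (push_letter a w)"
  by (cases w) (auto simp: push_letter_def reduced_Cons_Cons dest: reduced_tl)

lemma reduced_foldr: "reduced r \<Longrightarrow> reduced (foldr push_letter u r)"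
  by (induction u) (auto intro: reduced_push)

lemma reduced_reduce: "reduced (reduce w)"
  unfolding reduce_def by (rule reduced_foldr) simp

lemma set_push: "set (push_letter a w) \<subseteq> insert a (set w)"
  by (cases w) (auto simp: push_letter_def)

lemma set_foldr: "set (foldr push_letter u r) \<subseteq> set u \<union> set r"
  apply (induction u)
   apply simp
  using set_push by fastforce

lemma set_reduce: "set (reduce w) \<subseteq> set w"
  using set_foldr[of w "[]"] by (simp add: reduce_def)

lemma push_reduced: "reduced (a # w) \<Longrightarrow> push_letter a w = a # w"
  by (cases w) (auto simp: push_letter_def reduced_Cons_Cons)

lemma reduce_reduced: "reduced w \<Longrightarrow> reduce w = w"
proof (induction w)
  case (Cons a w)
  then show ?case using reduced_tl push_reduced by (metis reduce_Cons)
qed simp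

lemma push_cancel: "reduced t \<Longrightarrow> push_letter a (push_letter (inv_l a) t) = t"
proof (cases t)
  case Nil then show ?thesis by (simp add: push_letter_def cancels_iff)
next
  case (Cons b r)
  assume red: "reduced t"
  show ?thesis
  proof (cases "b = a")
    case True
    then have "push_letter (inv_l a) t = r" using Cons by (simp add: push_letter_def cancels_iff)
    moreover have "push_letter a r = t"
    proof (cases r)
      case Nil then show ?thesis using Cons True by (simp add: push_letter_def)
    next
      case (Cons c r')
      then show ?thesis using red \<open>t = b # r\<close> True
        by (simp add: push_letter_def reduced_Cons_Cons)
    qed
    ultimately show ?thesis by simp
  next
    case False
    then have "push_letter (inv_l a) t = inv_l a # t" using Cons
      by (auto simp: push_letter_def cancels_iff inv_l_def prod_eq_iff)
    then show ?thesis by (simp add: push_letter_def cancels_iff)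
  qed
qed

lemma foldr_push_push:
  assumes "reduced w" "reduced r"
  shows "foldr push_letter (push_letter a w) r = push_letter a (foldr push_letter w r)"
proof (cases w)
  case Nil then show ?thesis by (simp add: push_letter_def)
next
  case (Cons b w')
  show ?thesis
  proof (cases "cancels a b")
    case True
    then have "b = inv_l a" by (simp add: cancels_iff)
    have "push_letter a (push_letter (inv_l a) (foldr push_letter w' r)) = foldr push_letter w' r"
      using assms Cons by (intro push_cancel reduced_foldr) (auto dest: reduced_tl)
    then show ?thesis using Cons True \<open>b = inv_l a\<close>
      by (simp add: push_letter_def)
  next
    case False
    then show ?thesis using Cons by (simp add: push_letter_def)
  qed
qed

lemma foldr_push_reduce: "reduced r \<Longrightarrow> foldr push_letter (reduce u) r = foldr push_letter u r"
proof (induction u)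
  case (Cons a u)
  then show ?case by (simp add: reduce_Cons foldr_push_push reduced_reduce)
qed simp

lemma reduce_reduce_append: "reduce (reduce u @ v) = reduce (u @ v)"
  by (simp add: reduce_append foldr_push_reduce reduced_reduce)

lemma reduce_append_reduce: "reduce (u @ reduce v) = reduce (u @ v)"
  by (simp add: reduce_append reduce_reduced reduced_reduce)

definition inv_word where "inv_word w = rev (map inv_l w)"

lemma inv_word_cancel: "reduced t \<Longrightarrow> foldr push_letter (inv_word w) (foldr push_letter w t) = t"
proof (induction w)
  case (Cons a w)
  have "foldr push_letter (inv_word (a # w)) (foldr push_letter (a # w) t)
      = foldr push_letter (inv_word w) (push_letter (inv_l a) (push_letter a (foldr push_letter w t)))"
    by (simp add: inv_word_def)
  also have "\<dots> = foldr push_letter (inv_word w) (foldr push_letter w t)"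
    using push_cancel[of "foldr push_letter w t" "inv_l a"] Cons.prems by (simp add: reduced_foldr)
  finally show ?case using Cons by simp
qed (simp add: inv_word_def)

lemma reduce_inv_word: "reduce (inv_word w @ w) = []"
  using inv_word_cancel[of "[]" w] by (simp add: reduce_append reduce_def)

lemma set_inv_word: "fst ` set (inv_word w) = fst ` set w"
  by (force simp: inv_word_def inv_l_def image_iff)

lemma free_group_group: "group (free_group S)"
proof (rule groupI)
  fix x y assume "x \<in> carrier (free_group S)" "y \<in> carrier (free_group S)"
  then show "x \<otimes>\<^bsub>free_group S\<^esub> y \<in> carrier (free_group S)"
    using set_reduce[of "x @ y"] by (force simp: free_group_def reduced_reduce)
next
  show "\<one>\<^bsub>free_group S\<^esub> \<in> carrier (free_group S)" by (simp add: free_group_def)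
next
  fix x y z assume "x \<in> carrier (free_group S)" "y \<in> carrier (free_group S)" "z \<in> carrier (free_group S)"
  then show "x \<otimes>\<^bsub>free_group S\<^esub> y \<otimes>\<^bsub>free_group S\<^esub> z = x \<otimes>\<^bsub>free_group S\<^esub> (y \<otimes>\<^bsub>free_group S\<^esub> z)"
    by (simp add: free_group_def reduce_reduce_append reduce_append_reduce)
next
  fix x assume "x \<in> carrier (free_group S)"
  then show "\<one>\<^bsub>free_group S\<^esub> \<otimes>\<^bsub>free_group S\<^esub> x = x"
    by (simp add: free_group_def reduce_reduced)
next
  fix x assume x: "x \<in> carrier (free_group S)"
  show "\<exists>y\<in>carrier (free_group S). y \<otimes>\<^bsub>free_group S\<^esub> x = \<one>\<^bsub>free_group S\<^esub>"
  proof (intro bexI)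
    show "reduce (inv_word x) \<otimes>\<^bsub>free_group S\<^esub> x = \<one>\<^bsub>free_group S\<^esub>"
      by (simp add: free_group_def reduce_reduce_append reduce_inv_word)
    show "reduce (inv_word x) \<in> carrier (free_group S)"
      using x set_reduce[of "inv_word x"] set_inv_word[of x]
      by (auto simp: free_group_def reduced_reduce)
  qed
qed



locale side = A: group A + C: group C for A (structure) and C (structure) and f +
  assumes f_hom: "f \<in> hom C A" and f_inj: "inj_on f (carrier C)"
begin

abbreviation "H \<equiv> f ` carrier C"

lemma H_sub: "subgroup H A"
proof -
  interpret group_hom C A f using f_hom by (unfold_locales) simp
  show ?thesis using img_is_subgroup by simp
qed

lemma f_carr: "c \<in> carrier C \<Longrightarrow> f c \<in> carrier A"
  using f_hom by (auto simp: hom_def)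

definition rep :: "'a set \<Rightarrow> 'a" where "rep t = (SOME x. x \<in> t)"
definition recon :: "'c \<times> 'a set \<Rightarrow> 'a" where "recon y = f (fst y) \<otimes>\<^bsub>A\<^esub> rep (snd y)"
definition dec :: "'a \<Rightarrow> 'c \<times> 'a set" where
  "dec a = (inv_into (carrier C) f (a \<otimes>\<^bsub>A\<^esub> inv\<^bsub>A\<^esub> rep (H #>\<^bsub>A\<^esub> a)), H #>\<^bsub>A\<^esub> a)"
definition T where "T = rcosets\<^bsub>A\<^esub> H"
definition act :: "'a \<Rightarrow> 'c \<times> 'a set \<Rightarrow> 'c \<times> 'a set" where
  "act a y = dec (a \<otimes>\<^bsub>A\<^esub> recon y)"

lemma rep_in: "a \<in> carrier A \<Longrightarrow> rep (H #>\<^bsub>A\<^esub> a) \<in> H #>\<^bsub>A\<^esub> a"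
  unfolding rep_def by (rule someI[of _ a]) (rule A.rcos_self[OF _ H_sub])

lemma rep_carr: "a \<in> carrier A \<Longrightarrow> rep (H #>\<^bsub>A\<^esub> a) \<in> carrier A"
  using rep_in H_sub A.r_coset_subset_G subgroup.subset by blast

lemma rep_coset: "a \<in> carrier A \<Longrightarrow> H #>\<^bsub>A\<^esub> rep (H #>\<^bsub>A\<^esub> a) = H #>\<^bsub>A\<^esub> a"
  using A.repr_independence[OF rep_in _ H_sub] by simp

lemma quot_in_H: "a \<in> carrier A \<Longrightarrow> a \<otimes>\<^bsub>A\<^esub> inv\<^bsub>A\<^esub> rep (H #>\<^bsub>A\<^esub> a) \<in> H"
proof -
  assume a: "a \<in> carrier A"
  have "rep (H #>\<^bsub>A\<^esub> a) \<in> H #>\<^bsub>A\<^esub> a" by (rule rep_in[OF a])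
  then have "H #>\<^bsub>A\<^esub> a = H #>\<^bsub>A\<^esub> rep (H #>\<^bsub>A\<^esub> a)" using rep_coset[OF a] by simp
  then have "a \<in> H #>\<^bsub>A\<^esub> rep (H #>\<^bsub>A\<^esub> a)" using A.rcos_self[OF a H_sub] by simp
  then show ?thesis
    using subgroup.rcos_module_imp[OF H_sub A.is_group rep_carr[OF a]] by simp
qed

lemma dec_carr: "a \<in> carrier A \<Longrightarrow> dec a \<in> carrier C \<times> T"
  unfolding dec_def T_def using quot_in_H
  using A.rcosetsI[OF subgroup.subset[OF H_sub]]
  by (auto intro: inv_into_into)

lemma recon_dec: "a \<in> carrier A \<Longrightarrow> recon (dec a) = a"
proof -
  assume a: "a \<in> carrier A"
  have "f (inv_into (carrier C) f (a \<otimes>\<^bsub>A\<^esub> inv\<^bsub>A\<^esub> rep (H #>\<^bsub>A\<^esub> a))) = a \<otimes>\<^bsub>A\<^esub> inv\<^bsub>A\<^esub> rep (H #>\<^bsub>A\<^esub> a)"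
    using quot_in_H[OF a] by (simp add: f_inv_into_f)
  then show ?thesis
    by (simp add: recon_def dec_def A.m_assoc a rep_carr)
qed

lemma dec_recon:
  assumes y: "y \<in> carrier C \<times> T" shows "dec (recon y) = y"
proof -
  obtain c t where yc: "y = (c, t)" "c \<in> carrier C" "t \<in> T" using y by auto
  then obtain a where a: "a \<in> carrier A" "t = H #>\<^bsub>A\<^esub> a" by (auto simp: T_def RCOSETS_def)
  let ?r = "rep t"
  have r: "?r \<in> carrier A" using a rep_carr by simp
  have fc: "f c \<in> carrier A" "f c \<in> H" using yc f_carr by auto
  have rt: "H #>\<^bsub>A\<^esub> ?r = t" using a rep_coset by simp
  have coset: "H #>\<^bsub>A\<^esub> (f c \<otimes>\<^bsub>A\<^esub> ?r) = t"
  proof -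
    have "H #>\<^bsub>A\<^esub> (f c \<otimes>\<^bsub>A\<^esub> ?r) = (H #>\<^bsub>A\<^esub> f c) #>\<^bsub>A\<^esub> ?r"
      using A.coset_mult_assoc[of H "f c" ?r] subgroup.subset[OF H_sub] fc r by simp
    also have "H #>\<^bsub>A\<^esub> f c = H" using subgroup.rcos_const[OF H_sub A.is_group fc(2)] .
    finally show ?thesis using rt by simp
  qed
  have "recon y = f c \<otimes>\<^bsub>A\<^esub> ?r" by (simp add: recon_def yc)
  moreover have "(f c \<otimes>\<^bsub>A\<^esub> ?r) \<otimes>\<^bsub>A\<^esub> inv\<^bsub>A\<^esub> ?r = f c"
    using fc r by (simp add: A.m_assoc)
  ultimately show ?thesis using coset yc
    by (simp add: dec_def inv_into_f_f[OF f_inj])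
qed

lemma recon_carr: "y \<in> carrier C \<times> T \<Longrightarrow> recon y \<in> carrier A"
  unfolding recon_def T_def RCOSETS_def using f_carr rep_carr by auto

lemma act_carr: "a \<in> carrier A \<Longrightarrow> y \<in> carrier C \<times> T \<Longrightarrow> act a y \<in> carrier C \<times> T"
  unfolding act_def by (intro dec_carr A.m_closed recon_carr)

lemma act_mult: "a1 \<in> carrier A \<Longrightarrow> a2 \<in> carrier A \<Longrightarrow> y \<in> carrier C \<times> T \<Longrightarrow>
   act (a1 \<otimes>\<^bsub>A\<^esub> a2) y = act a1 (act a2 y)"
  unfolding act_def using recon_dec recon_carr by (simp add: A.m_assoc)

lemma act_one: "y \<in> carrier C \<times> T \<Longrightarrow> act \<one>\<^bsub>A\<^esub> y = y"
  unfolding act_def using recon_carr dec_recon by simp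

lemma act_f: "c0 \<in> carrier C \<Longrightarrow> c \<in> carrier C \<Longrightarrow> t \<in> T \<Longrightarrow> act (f c0) (c, t) = (c0 \<otimes>\<^bsub>C\<^esub> c, t)"
proof -
  assume h: "c0 \<in> carrier C" "c \<in> carrier C" "t \<in> T"
  have "f c0 \<otimes>\<^bsub>A\<^esub> recon (c, t) = recon (c0 \<otimes>\<^bsub>C\<^esub> c, t)"
  proof -
    obtain a where a: "a \<in> carrier A" "t = H #>\<^bsub>A\<^esub> a" using h by (auto simp: T_def RCOSETS_def)
    show ?thesis unfolding recon_def using h a f_hom f_carr rep_carr[OF a(1)]
      by (simp add: hom_mult A.m_assoc)
  qed
  then show ?thesis using h dec_recon by (simp add: act_def)
qed

definition y0 where "y0 = dec \<one>\<^bsub>A\<^esub>"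

lemma y0_carr: "y0 \<in> carrier C \<times> T" unfolding y0_def by (rule dec_carr) simp

lemma act_inj: "a1 \<in> carrier A \<Longrightarrow> a2 \<in> carrier A \<Longrightarrow> act a1 y0 = act a2 y0 \<Longrightarrow> a1 = a2"
proof -
  assume h: "a1 \<in> carrier A" "a2 \<in> carrier A" "act a1 y0 = act a2 y0"
  then have "recon (act a1 y0) = recon (act a2 y0)" by simp
  then have "a1 \<otimes>\<^bsub>A\<^esub> recon y0 = a2 \<otimes>\<^bsub>A\<^esub> recon y0"
    unfolding act_def using h recon_carr[OF y0_carr] recon_dec by simp
  then show ?thesis using h recon_carr[OF y0_carr] A.r_cancel_one' by (metis A.r_cancel)
qed

lemma T_ne: "H \<in> T"
  unfolding T_def using A.rcosetsI[of H "\<one>\<^bsub>A\<^esub>"] subgroup.subset[OF H_sub] A.coset_mult_one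
  by (metis A.one_closed)

end


lemma action_hom:
  assumes G: "group G"
    and cl: "\<And>a x. a \<in> carrier G \<Longrightarrow> x \<in> Xs \<Longrightarrow> Fa a x \<in> Xs"
    and mu: "\<And>a b x. a \<in> carrier G \<Longrightarrow> b \<in> carrier G \<Longrightarrow> x \<in> Xs \<Longrightarrow> Fa (a \<otimes>\<^bsub>G\<^esub> b) x = Fa a (Fa b x)"
    and on: "\<And>x. x \<in> Xs \<Longrightarrow> Fa (\<one>\<^bsub>G\<^esub>) x = x"
  shows "(\<lambda>a. restrict (Fa a) Xs) \<in> hom G (BijGroup Xs)"
proof -
  have bij: "restrict (Fa a) Xs \<in> Bij Xs" if a: "a \<in> carrier G" for a
  proof -
    have ia: "inv\<^bsub>G\<^esub> a \<in> carrier G" using G a by simp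
    have "bij_betw (Fa a) Xs Xs"
    proof (rule bij_betwI[where g = "Fa (inv\<^bsub>G\<^esub> a)"])
      show "Fa a \<in> Xs \<rightarrow> Xs" using cl a by auto
      show "Fa (inv\<^bsub>G\<^esub> a) \<in> Xs \<rightarrow> Xs" using cl ia by auto
      show "Fa (inv\<^bsub>G\<^esub> a) (Fa a x) = x" if "x \<in> Xs" for x
      proof -
        have "inv\<^bsub>G\<^esub> a \<otimes>\<^bsub>G\<^esub> a = \<one>\<^bsub>G\<^esub>" using G a by (rule group.l_inv)
        then show ?thesis using mu[OF ia a that] on[OF that] by metis
      qed
      show "Fa a (Fa (inv\<^bsub>G\<^esub> a) x) = x" if "x \<in> Xs" for x
      proof -
        have "a \<otimes>\<^bsub>G\<^esub> inv\<^bsub>G\<^esub> a = \<one>\<^bsub>G\<^esub>" using G a by (rule group.r_inv)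
        then show ?thesis using mu[OF a ia that] on[OF that] by metis
      qed
    qed
    then show ?thesis unfolding Bij_def by simp
  qed
  show ?thesis
  proof (rule homI)
    show "restrict (Fa a) Xs \<in> carrier (BijGroup Xs)" if "a \<in> carrier G" for a
      using bij[OF that] by (simp add: BijGroup_def)
    show "restrict (Fa (a \<otimes>\<^bsub>G\<^esub> b)) Xs = restrict (Fa a) Xs \<otimes>\<^bsub>BijGroup Xs\<^esub> restrict (Fa b) Xs"
      if ab: "a \<in> carrier G" "b \<in> carrier G" for a b
    proof -
      have "restrict (Fa a) Xs \<otimes>\<^bsub>BijGroup Xs\<^esub> restrict (Fa b) Xs = compose Xs (restrict (Fa a) Xs) (restrict (Fa b) Xs)"
        using bij[OF ab(1)] bij[OF ab(2)] by (simp add: BijGroup_def)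
      also have "\<dots> = restrict (Fa (a \<otimes>\<^bsub>G\<^esub> b)) Xs"
        unfolding compose_def
      proof (rule restrict_ext)
        fix x assume x: "x \<in> Xs"
        then show "restrict (Fa a) Xs (restrict (Fa b) Xs x) = Fa (a \<otimes>\<^bsub>G\<^esub> b) x"
          using cl[OF ab(2) x] mu[OF ab x] by simp
      qed
      finally show ?thesis by simp
    qed
  qed
qed

theorem amalg_target:
  fixes A :: "('a, 'm) monoid_scheme" and B :: "('b, 'n) monoid_scheme" and C :: "('c, 'k) monoid_scheme"
  assumes A: "group A" and B: "group B" and C: "group C"
    and f: "f \<in> hom C A" "inj_on f (carrier C)"
    and g: "g \<in> hom C B" "inj_on g (carrier C)"
  shows "\<exists>(K::(('c \<times> ('a set \<times> 'b set)) \<Rightarrow> ('c \<times> ('a set \<times> 'b set))) monoid) \<alpha> \<beta>. group K \<and>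
     \<alpha> \<in> hom A K \<and> inj_on \<alpha> (carrier A) \<and> \<beta> \<in> hom B K \<and> (\<forall>c\<in>carrier C. \<alpha> (f c) = \<beta> (g c))"
proof -
  interpret SA: side A C f using A C f by (simp add: side_def side_axioms_def)
  interpret SB: side B C g using B C g by (simp add: side_def side_axioms_def)
  define Xs where "Xs = carrier C \<times> (SA.T \<times> SB.T)"
  define FA where "FA a (x::'c \<times> 'a set \<times> 'b set) = (fst (SA.act a (fst x, fst (snd x))), (snd (SA.act a (fst x, fst (snd x))), snd (snd x)))" for a x
  define FB where "FB b (x::'c \<times> 'a set \<times> 'b set) = (fst (SB.act b (fst x, snd (snd x))), (fst (snd x), snd (SB.act b (fst x, snd (snd x)))))" for b x
  have hA: "(\<lambda>a. restrict (FA a) Xs) \<in> hom A (BijGroup Xs)"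
  proof (rule action_hom[OF A])
    fix a x assume ax: "a \<in> carrier A" "x \<in> Xs"
    obtain c t u where x: "x = (c, t, u)" by (cases x) auto
    have "SA.act a (c, t) \<in> carrier C \<times> SA.T" using ax x by (intro SA.act_carr) (auto simp: Xs_def)
    then show "FA a x \<in> Xs" using ax x by (auto simp: FA_def Xs_def)
  next
    fix a b x assume ax: "a \<in> carrier A" "b \<in> carrier A" "x \<in> Xs"
    obtain c t u where x: "x = (c, t, u)" by (cases x) auto
    have "SA.act (a \<otimes>\<^bsub>A\<^esub> b) (c, t) = SA.act a (SA.act b (c, t))"
      using ax x by (intro SA.act_mult) (auto simp: Xs_def)
    then show "FA (a \<otimes>\<^bsub>A\<^esub> b) x = FA a (FA b x)" using x by (simp add: FA_def)
  next
    fix x assume ax: "x \<in> Xs"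
    obtain c t u where x: "x = (c, t, u)" by (cases x) auto
    have "SA.act (\<one>\<^bsub>A\<^esub>) (c, t) = (c, t)" using ax x by (intro SA.act_one) (auto simp: Xs_def)
    then show "FA (\<one>\<^bsub>A\<^esub>) x = x" using x by (simp add: FA_def)
  qed
  have hB: "(\<lambda>b. restrict (FB b) Xs) \<in> hom B (BijGroup Xs)"
  proof (rule action_hom[OF B])
    fix a x assume ax: "a \<in> carrier B" "x \<in> Xs"
    obtain c t u where x: "x = (c, t, u)" by (cases x) auto
    have "SB.act a (c, u) \<in> carrier C \<times> SB.T" using ax x by (intro SB.act_carr) (auto simp: Xs_def)
    then show "FB a x \<in> Xs" using ax x by (auto simp: FB_def Xs_def)
  next
    fix a b x assume ax: "a \<in> carrier B" "b \<in> carrier B" "x \<in> Xs"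
    obtain c t u where x: "x = (c, t, u)" by (cases x) auto
    have "SB.act (a \<otimes>\<^bsub>B\<^esub> b) (c, u) = SB.act a (SB.act b (c, u))"
      using ax x by (intro SB.act_mult) (auto simp: Xs_def)
    then show "FB (a \<otimes>\<^bsub>B\<^esub> b) x = FB a (FB b x)" using x by (simp add: FB_def)
  next
    fix x assume ax: "x \<in> Xs"
    obtain c t u where x: "x = (c, t, u)" by (cases x) auto
    have "SB.act (\<one>\<^bsub>B\<^esub>) (c, u) = (c, u)" using ax x by (intro SB.act_one) (auto simp: Xs_def)
    then show "FB (\<one>\<^bsub>B\<^esub>) x = x" using x by (simp add: FB_def)
  qed
  have inj: "inj_on (\<lambda>a. restrict (FA a) Xs) (carrier A)"
  proof (rule inj_onI)
    fix a1 a2 assume a: "a1 \<in> carrier A" "a2 \<in> carrier A" "restrict (FA a1) Xs = restrict (FA a2) Xs"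
    obtain c t where y0: "SA.y0 = (c, t)" "c \<in> carrier C" "t \<in> SA.T" using SA.y0_carr by auto
    have x: "(c, (t, SB.H)) \<in> Xs" using y0 SB.T_ne by (simp add: Xs_def)
    have "FA a1 (c, (t, SB.H)) = FA a2 (c, (t, SB.H))"
      using fun_cong[OF a(3), of "(c, (t, SB.H))"] x by simp
    then have "SA.act a1 (c, t) = SA.act a2 (c, t)" by (simp add: FA_def prod_eq_iff)
    then have "SA.act a1 SA.y0 = SA.act a2 SA.y0" using y0(1) by simp
    then show "a1 = a2" using SA.act_inj a by blast
  qed
  have comp: "\<forall>c\<in>carrier C. restrict (FA (f c)) Xs = restrict (FB (g c)) Xs"
  proof (intro ballI restrict_ext)
    fix c x assume cx: "c \<in> carrier C" "x \<in> Xs"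
    obtain c1 t u where x: "x = (c1, t, u)" "c1 \<in> carrier C" "t \<in> SA.T" "u \<in> SB.T"
      using cx by (cases x) (auto simp: Xs_def)
    show "FA (f c) x = FB (g c) x"
      using SA.act_f[OF cx(1) x(2,3)] SB.act_f[OF cx(1) x(2,4)] x(1)
      by (simp add: FA_def FB_def)
  qed
  show ?thesis
    using group_BijGroup[of Xs] hA hB inj comp by blast
qed



definition lt :: "('a, 'b) monoid_scheme \<Rightarrow> ('x \<Rightarrow> 'a) \<Rightarrow> 'x \<times> bool \<Rightarrow> 'a" where
  "lt K h a = (if snd a then h (fst a) else inv\<^bsub>K\<^esub> (h (fst a)))"

definition ev :: "('a, 'b) monoid_scheme \<Rightarrow> ('x \<Rightarrow> 'a) \<Rightarrow> ('x \<times> bool) list \<Rightarrow> 'a" where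
  "ev K h w = foldr (\<lambda>a acc. lt K h a \<otimes>\<^bsub>K\<^esub> acc) w \<one>\<^bsub>K\<^esub>"

lemma ev_Nil[simp]: "ev K h [] = \<one>\<^bsub>K\<^esub>" by (simp add: ev_def)
lemma ev_Cons: "ev K h (a # w) = lt K h a \<otimes>\<^bsub>K\<^esub> ev K h w" by (simp add: ev_def)

locale evl = K: group K for K (structure) and h and S +
  assumes h: "\<And>x. x \<in> S \<Longrightarrow> h x \<in> carrier K"
begin

lemma lt_carr: "fst a \<in> S \<Longrightarrow> lt K h a \<in> carrier K"
  using h by (simp add: lt_def)

lemma ev_carr: "fst ` set w \<subseteq> S \<Longrightarrow> ev K h w \<in> carrier K"
  by (induction w) (auto simp: ev_Cons lt_carr)

lemma lt_cancel: "fst a \<in> S \<Longrightarrow> lt K h a \<otimes> lt K h (inv_l a) = \<one>"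
  using h by (cases a) (auto simp: lt_def inv_l_def)

lemma ev_push:
  assumes "fst a \<in> S" "fst ` set w \<subseteq> S"
  shows "ev K h (push_letter a w) = lt K h a \<otimes> ev K h w"
proof (cases w)
  case Nil then show ?thesis by (simp add: push_letter_def ev_Cons)
next
  case (Cons b r)
  show ?thesis
  proof (cases "cancels a b")
    case True
    then have b: "b = inv_l a" by (simp add: cancels_iff)
    have r: "ev K h r \<in> carrier K" using assms Cons by (intro ev_carr) auto
    have "lt K h a \<otimes> ev K h w = (lt K h a \<otimes> lt K h b) \<otimes> ev K h r"
      using Cons b assms r lt_carr[of a] lt_carr[of b]
      by (simp add: ev_Cons K.m_assoc inv_l_def)
    also have "\<dots> = ev K h r" using b lt_cancel[OF assms(1)] r by simp
    finally show ?thesis using Cons True by (simp add: push_letter_def)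
  next
    case False
    then show ?thesis using Cons by (simp add: push_letter_def ev_Cons)
  qed
qed

lemma ev_reduce: "fst ` set w \<subseteq> S \<Longrightarrow> ev K h (reduce w) = ev K h w"
proof (induction w)
  case (Cons a w)
  have "fst ` set (reduce w) \<subseteq> S" using Cons.prems set_reduce[of w] by auto
  then show ?case using Cons by (simp add: reduce_Cons ev_push ev_Cons)
qed simp

lemma ev_append: "fst ` set u \<subseteq> S \<Longrightarrow> fst ` set v \<subseteq> S \<Longrightarrow> ev K h (u @ v) = ev K h u \<otimes> ev K h v"
  by (induction u) (auto simp: ev_Cons K.m_assoc lt_carr ev_carr)

lemma ev_hom: "ev K h \<in> hom (free_group S) K"
proof (rule homI)
  fix x assume "x \<in> carrier (free_group S)"
  then show "ev K h x \<in> carrier K" by (intro ev_carr) (simp add: free_group_def)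
next
  fix x y assume "x \<in> carrier (free_group S)" "y \<in> carrier (free_group S)"
  then show "ev K h (x \<otimes>\<^bsub>free_group S\<^esub> y) = ev K h x \<otimes> ev K h y"
    using ev_reduce[of "x @ y"] ev_append[of x y] by (auto simp: free_group_def)
qed

lemma ev_nc:
  assumes R: "R \<subseteq> carrier (free_group S)" and ev1: "\<And>r. r \<in> R \<Longrightarrow> ev K h r = \<one>"
    and x: "x \<in> normal_closure (free_group S) R"
  shows "ev K h x = \<one>"
proof -
  interpret FG: group "free_group S" by (rule free_group_group)
  interpret hh: group_hom "free_group S" K "ev K h"
    by (unfold_locales) (rule ev_hom)
  let ?X = "\<Union>g\<in>carrier (free_group S). \<Union>r\<in>R. {g \<otimes>\<^bsub>free_group S\<^esub> r \<otimes>\<^bsub>free_group S\<^esub> inv\<^bsub>free_group S\<^esub> g}"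
  have X1: "ev K h y = \<one>" if "y \<in> ?X" for y
  proof -
    from that obtain g r where gr: "g \<in> carrier (free_group S)" "r \<in> R"
      "y = g \<otimes>\<^bsub>free_group S\<^esub> r \<otimes>\<^bsub>free_group S\<^esub> inv\<^bsub>free_group S\<^esub> g" by blast
    have r: "r \<in> carrier (free_group S)" using R gr by auto
    have "ev K h y = ev K h g \<otimes> ev K h r \<otimes> inv (ev K h g)"
      using gr r by simp
    also have "\<dots> = \<one>" using gr ev1 by simp
    finally show ?thesis .
  qed
  have Xc: "?X \<subseteq> carrier (free_group S)" using R by auto
  from x have "x \<in> generate (free_group S) ?X" by (simp add: normal_closure_def)
  then show ?thesis
  proof (induction rule: generate.induct)
    case one then show ?case by simp
  next
    case (incl y) then show ?case using X1 by blast
  next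
    case (inv y)
    then have "y \<in> carrier (free_group S)" using Xc by auto
    then show ?case using X1[OF inv] hh.hom_inv[of y] by simp
  next
    case (eng y1 y2)
    then show ?case using FG.generate_in_carrier[OF Xc] by simp
  qed
qed

end

abbreviation "FGab A B \<equiv> free_group (carrier A <+> carrier B)"
abbreviation "NC A B C f g \<equiv> normal_closure (FGab A B) (amalg_relators A B C f g)"
definition i1 where "i1 A B C f g a = NC A B C f g #>\<^bsub>FGab A B\<^esub> [(Inl a, True)]"
definition i2 where "i2 A B C f g b = NC A B C f g #>\<^bsub>FGab A B\<^esub> [(Inr b, True)]"

locale amal = A: group A + B: group B for A (structure) and B (structure) and C :: "('c, 'k) monoid_scheme" and f g +
  assumes f: "\<And>c. c \<in> carrier C \<Longrightarrow> f c \<in> carrier A"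
    and g: "\<And>c. c \<in> carrier C \<Longrightarrow> g c \<in> carrier B"
begin

abbreviation "FGs \<equiv> FGab A B"
abbreviation "N \<equiv> NC A B C f g"
abbreviation "R \<equiv> amalg_relators A B C f g"
abbreviation "AP \<equiv> amalgamated_product A B C f g"

sublocale FG: group FGs by (rule free_group_group)

lemma red_carr: "fst ` set w \<subseteq> carrier A <+> carrier B \<Longrightarrow> reduce w \<in> carrier FGs"
  using set_reduce[of w] by (force simp: free_group_def reduced_reduce)

lemma R_carr: "R \<subseteq> carrier FGs"
  unfolding amalg_relators_def using f g
  by (auto intro!: red_carr)

lemma N_normal: "N \<lhd> FGs"
  unfolding normal_closure_def
proof (rule FG.normal_generateI)
  show "(\<Union>g\<in>carrier FGs. \<Union>r\<in>R. {g \<otimes>\<^bsub>FGs\<^esub> r \<otimes>\<^bsub>FGs\<^esub> inv\<^bsub>FGs\<^esub> g}) \<subseteq> carrier FGs"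
    using R_carr by auto
next
  fix x y assume "x \<in> (\<Union>g\<in>carrier FGs. \<Union>r\<in>R. {g \<otimes>\<^bsub>FGs\<^esub> r \<otimes>\<^bsub>FGs\<^esub> inv\<^bsub>FGs\<^esub> g})" "y \<in> carrier FGs"
  then obtain g r where gr: "g \<in> carrier FGs" "r \<in> R" "x = g \<otimes>\<^bsub>FGs\<^esub> r \<otimes>\<^bsub>FGs\<^esub> inv\<^bsub>FGs\<^esub> g" by blast
  have r: "r \<in> carrier FGs" using gr R_carr by auto
  have "y \<otimes>\<^bsub>FGs\<^esub> x \<otimes>\<^bsub>FGs\<^esub> inv\<^bsub>FGs\<^esub> y
     = (y \<otimes>\<^bsub>FGs\<^esub> g) \<otimes>\<^bsub>FGs\<^esub> r \<otimes>\<^bsub>FGs\<^esub> inv\<^bsub>FGs\<^esub> (y \<otimes>\<^bsub>FGs\<^esub> g)"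
    using gr r \<open>y \<in> carrier FGs\<close> by (simp add: FG.m_assoc FG.inv_mult_group)
  moreover have "y \<otimes>\<^bsub>FGs\<^esub> g \<in> carrier FGs" using gr \<open>y \<in> carrier FGs\<close> by simp
  ultimately show "y \<otimes>\<^bsub>FGs\<^esub> x \<otimes>\<^bsub>FGs\<^esub> inv\<^bsub>FGs\<^esub> y \<in> (\<Union>g\<in>carrier FGs. \<Union>r\<in>R. {g \<otimes>\<^bsub>FGs\<^esub> r \<otimes>\<^bsub>FGs\<^esub> inv\<^bsub>FGs\<^esub> g})"
    using gr(2) by blast
qed

sublocale Nn: normal N FGs by (rule N_normal)

lemma group_AP: "group AP"
  unfolding amalgamated_product_def by (rule Nn.factorgroup_is_group)

lemma R_in_N: "r \<in> R \<Longrightarrow> r \<in> N"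
proof -
  assume r: "r \<in> R"
  then have rc: "r \<in> carrier FGs" using R_carr by auto
  have "\<one>\<^bsub>FGs\<^esub> \<otimes>\<^bsub>FGs\<^esub> r \<otimes>\<^bsub>FGs\<^esub> inv\<^bsub>FGs\<^esub> \<one>\<^bsub>FGs\<^esub> = r" using rc by simp
  then show "r \<in> N" unfolding normal_closure_def
    using r by (intro generate.incl) (blast intro: FG.one_closed)
qed

lemma letter_carr: "x \<in> carrier A <+> carrier B \<Longrightarrow> [(x, b)] \<in> carrier FGs"
  by (simp add: free_group_def)

lemma inv_letter: "x \<in> carrier A <+> carrier B \<Longrightarrow> inv\<^bsub>FGs\<^esub> [(x, True)] = [(x, False)]"
  by (rule FG.inv_equality) (auto simp: free_group_def reduce_Cons push_letter_def cancels_def)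

lemma coset_eq: "w \<in> carrier FGs \<Longrightarrow> v \<in> carrier FGs \<Longrightarrow> w \<otimes>\<^bsub>FGs\<^esub> inv\<^bsub>FGs\<^esub> v \<in> N \<Longrightarrow>
   N #>\<^bsub>FGs\<^esub> w = N #>\<^bsub>FGs\<^esub> v"
  using Nn.rcos_module_rev[OF FG.is_group] FG.repr_independence[OF _ _ Nn.subgroup_axioms]
  by metis

lemma i1_mult: "a \<in> carrier A \<Longrightarrow> b \<in> carrier A \<Longrightarrow> i1 A B C f g a \<otimes>\<^bsub>AP\<^esub> i1 A B C f g b = i1 A B C f g (a \<otimes> b)"
proof -
  assume ab: "a \<in> carrier A" "b \<in> carrier A"
  have l: "[(Inl a, True)] \<in> carrier FGs" "[(Inl b, True)] \<in> carrier FGs" "[(Inl (a \<otimes> b), True)] \<in> carrier FGs"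
    using ab by (auto intro!: letter_carr)
  have "i1 A B C f g a \<otimes>\<^bsub>AP\<^esub> i1 A B C f g b = N #>\<^bsub>FGs\<^esub> ([(Inl a, True)] \<otimes>\<^bsub>FGs\<^esub> [(Inl b, True)])"
    unfolding amalgamated_product_def i1_def using Nn.rcos_sum l by simp
  also have "\<dots> = i1 A B C f g (a \<otimes> b)"
    unfolding i1_def
  proof (rule coset_eq)
    show "[(Inl a, True)] \<otimes>\<^bsub>FGs\<^esub> [(Inl b, True)] \<in> carrier FGs" using l by simp
    show "[(Inl (a \<otimes> b), True)] \<in> carrier FGs" by (rule l)
    have "[(Inl a, True)] \<otimes>\<^bsub>FGs\<^esub> [(Inl b, True)] \<otimes>\<^bsub>FGs\<^esub> inv\<^bsub>FGs\<^esub> [(Inl (a \<otimes> b), True)]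
       = reduce [(Inl a, True), (Inl b, True), (Inl (a \<otimes> b), False)]"
      using ab by (subst inv_letter) (auto simp: free_group_def reduce_reduce_append simp del: reduce_append)
    also have "\<dots> \<in> R" using ab unfolding amalg_relators_def by blast
    finally show "[(Inl a, True)] \<otimes>\<^bsub>FGs\<^esub> [(Inl b, True)] \<otimes>\<^bsub>FGs\<^esub> inv\<^bsub>FGs\<^esub> [(Inl (a \<otimes> b), True)] \<in> N"
      by (rule R_in_N)
  qed
  finally show ?thesis .
qed

lemma i1_carr: "a \<in> carrier A \<Longrightarrow> i1 A B C f g a \<in> carrier AP"
  unfolding amalgamated_product_def i1_def FactGroup_def RCOSETS_def
  using letter_carr[of "Inl a"] by auto

lemma i1_one: "i1 A B C f g \<one> = \<one>\<^bsub>AP\<^esub>"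
proof -
  have "reduce [(Inl \<one>, True), (Inl \<one>, True), (Inl (\<one> \<otimes> \<one>), False)] \<in> R"
    unfolding amalg_relators_def by blast
  moreover have "reduce [(Inl \<one>, True), (Inl \<one>, True), (Inl (\<one> \<otimes> \<one>), False)] = [(Inl \<one>, True)]"
    by (simp add: reduce_Cons push_letter_def cancels_def)
  ultimately have "[(Inl \<one>, True)] \<in> N" using R_in_N by metis
  then show ?thesis unfolding i1_def amalgamated_product_def
    using Nn.rcos_const[OF FG.is_group] by simp
qed

lemma i2_mult: "a \<in> carrier B \<Longrightarrow> b \<in> carrier B \<Longrightarrow> i2 A B C f g a \<otimes>\<^bsub>AP\<^esub> i2 A B C f g b = i2 A B C f g (a \<otimes>\<^bsub>B\<^esub> b)"
proof -
  assume ab: "a \<in> carrier B" "b \<in> carrier B"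
  have l: "[(Inr a, True)] \<in> carrier FGs" "[(Inr b, True)] \<in> carrier FGs" "[(Inr (a \<otimes>\<^bsub>B\<^esub> b), True)] \<in> carrier FGs"
    using ab by (auto intro!: letter_carr)
  have "i2 A B C f g a \<otimes>\<^bsub>AP\<^esub> i2 A B C f g b = N #>\<^bsub>FGs\<^esub> ([(Inr a, True)] \<otimes>\<^bsub>FGs\<^esub> [(Inr b, True)])"
    unfolding amalgamated_product_def i2_def using Nn.rcos_sum l by simp
  also have "\<dots> = i2 A B C f g (a \<otimes>\<^bsub>B\<^esub> b)"
    unfolding i2_def
  proof (rule coset_eq)
    show "[(Inr a, True)] \<otimes>\<^bsub>FGs\<^esub> [(Inr b, True)] \<in> carrier FGs" using l by simp
    show "[(Inr (a \<otimes>\<^bsub>B\<^esub> b), True)] \<in> carrier FGs" by (rule l)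
    have "[(Inr a, True)] \<otimes>\<^bsub>FGs\<^esub> [(Inr b, True)] \<otimes>\<^bsub>FGs\<^esub> inv\<^bsub>FGs\<^esub> [(Inr (a \<otimes>\<^bsub>B\<^esub> b), True)]
       = reduce [(Inr a, True), (Inr b, True), (Inr (a \<otimes>\<^bsub>B\<^esub> b), False)]"
      using ab by (subst inv_letter) (auto simp: free_group_def reduce_reduce_append simp del: reduce_append)
    also have "\<dots> \<in> R" using ab unfolding amalg_relators_def by blast
    finally show "[(Inr a, True)] \<otimes>\<^bsub>FGs\<^esub> [(Inr b, True)] \<otimes>\<^bsub>FGs\<^esub> inv\<^bsub>FGs\<^esub> [(Inr (a \<otimes>\<^bsub>B\<^esub> b), True)] \<in> N"
      by (rule R_in_N)
  qed
  finally show ?thesis .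
qed

lemma i2_carr: "b \<in> carrier B \<Longrightarrow> i2 A B C f g b \<in> carrier AP"
  unfolding amalgamated_product_def i2_def FactGroup_def RCOSETS_def
  using letter_carr[of "Inr b"] by auto

lemma i1_f: "c \<in> carrier C \<Longrightarrow> i1 A B C f g (f c) = i2 A B C f g (g c)"
  unfolding i1_def i2_def
proof (rule coset_eq)
  assume c: "c \<in> carrier C"
  show "[(Inl (f c), True)] \<in> carrier FGs" "[(Inr (g c), True)] \<in> carrier FGs"
    using c f g by (auto intro!: letter_carr)
  have "[(Inl (f c), True)] \<otimes>\<^bsub>FGs\<^esub> inv\<^bsub>FGs\<^esub> [(Inr (g c), True)] = reduce [(Inl (f c), True), (Inr (g c), False)]"
    using c g by (subst inv_letter) (auto simp: free_group_def)
  also have "\<dots> \<in> R" using c unfolding amalg_relators_def by blast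
  finally show "[(Inl (f c), True)] \<otimes>\<^bsub>FGs\<^esub> inv\<^bsub>FGs\<^esub> [(Inr (g c), True)] \<in> N" by (rule R_in_N)
qed

lemma universal:
  assumes K: "group K" and \<alpha>: "\<alpha> \<in> hom A K" and \<beta>: "\<beta> \<in> hom B K"
    and comp: "\<And>c. c \<in> carrier C \<Longrightarrow> \<alpha> (f c) = \<beta> (g c)"
  shows "\<exists>\<psi>. \<psi> \<in> hom AP K \<and> (\<forall>a\<in>carrier A. \<psi> (i1 A B C f g a) = \<alpha> a)
          \<and> (\<forall>b\<in>carrier B. \<psi> (i2 A B C f g b) = \<beta> b)"
proof -
  define h where "h = case_sum \<alpha> \<beta>"
  interpret E: evl K h "carrier A <+> carrier B"
    unfolding evl_def evl_axioms_def using K \<alpha> \<beta> by (auto simp: h_def hom_def)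
  interpret KK: group K by (rule K)
  have aK: "\<alpha> x \<in> carrier K" if "x \<in> carrier A" for x using \<alpha> that by (auto simp: hom_def)
  have bK: "\<beta> x \<in> carrier K" if "x \<in> carrier B" for x using \<beta> that by (auto simp: hom_def)
  have evR: "ev K h r = \<one>\<^bsub>K\<^esub>" if "r \<in> R" for r
  proof -
    from that consider
      (a) x y where "x \<in> carrier A" "y \<in> carrier A" "r = reduce [(Inl x, True), (Inl y, True), (Inl (x \<otimes> y), False)]"
    | (b) x y where "x \<in> carrier B" "y \<in> carrier B" "r = reduce [(Inr x, True), (Inr y, True), (Inr (x \<otimes>\<^bsub>B\<^esub> y), False)]"
    | (c) c where "c \<in> carrier C" "r = reduce [(Inl (f c), True), (Inr (g c), False)]"
      unfolding amalg_relators_def by blast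
    then show ?thesis
    proof cases
      case a
      have xy: "x \<otimes> y \<in> carrier A" using a by simp
      have "ev K h r = \<alpha> x \<otimes>\<^bsub>K\<^esub> (\<alpha> y \<otimes>\<^bsub>K\<^esub> (inv\<^bsub>K\<^esub> \<alpha> (x \<otimes> y) \<otimes>\<^bsub>K\<^esub> \<one>\<^bsub>K\<^esub>))"
      proof -
        have "fst ` set [(Inl x, True), (Inl y, True), (Inl (x \<otimes> y), False)] \<subseteq> carrier A <+> carrier B"
          using a xy by auto
        from E.ev_reduce[OF this] show ?thesis using a by (simp add: ev_Cons lt_def h_def)
      qed
      also have "\<dots> = \<one>\<^bsub>K\<^esub>"
      proof -
        have e: "\<alpha> (x \<otimes> y) = \<alpha> x \<otimes>\<^bsub>K\<^esub> \<alpha> y" using \<alpha> a by (simp add: hom_mult)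
        show ?thesis unfolding e using aK a by (simp add: E.K.m_assoc[symmetric])
      qed
      finally show ?thesis .
    next
      case b
      have xy: "x \<otimes>\<^bsub>B\<^esub> y \<in> carrier B" using b by simp
      have "ev K h r = \<beta> x \<otimes>\<^bsub>K\<^esub> (\<beta> y \<otimes>\<^bsub>K\<^esub> (inv\<^bsub>K\<^esub> \<beta> (x \<otimes>\<^bsub>B\<^esub> y) \<otimes>\<^bsub>K\<^esub> \<one>\<^bsub>K\<^esub>))"
      proof -
        have "fst ` set [(Inr x, True), (Inr y, True), (Inr (x \<otimes>\<^bsub>B\<^esub> y), False)] \<subseteq> carrier A <+> carrier B"
          using b xy by auto
        from E.ev_reduce[OF this] show ?thesis using b by (simp add: ev_Cons lt_def h_def)
      qed
      also have "\<dots> = \<one>\<^bsub>K\<^esub>"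
      proof -
        have e: "\<beta> (x \<otimes>\<^bsub>B\<^esub> y) = \<beta> x \<otimes>\<^bsub>K\<^esub> \<beta> y" using \<beta> b by (simp add: hom_mult)
        show ?thesis unfolding e using bK b by (simp add: E.K.m_assoc[symmetric])
      qed
      finally show ?thesis .
    next
      case c
      have "reduce [(Inl (f c), True), (Inr (g c), False)] = [(Inl (f c), True), (Inr (g c), False)]"
        by (simp add: reduce_Cons push_letter_def cancels_def)
      then have "ev K h r = \<beta> (g c) \<otimes>\<^bsub>K\<^esub> (inv\<^bsub>K\<^esub> \<beta> (g c) \<otimes>\<^bsub>K\<^esub> \<one>\<^bsub>K\<^esub>)"
        using c comp by (simp add: ev_Cons lt_def h_def)
      then show ?thesis using c bK g by simp
    qed
  qed
  have ev_hom: "ev K h \<in> hom FGs K" by (rule E.ev_hom)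
  have resp: "ev K h x = ev K h y" if xy: "x \<in> carrier FGs" "y \<in> carrier FGs" "N #>\<^bsub>FGs\<^esub> x = N #>\<^bsub>FGs\<^esub> y" for x y
  proof -
    have "x \<in> N #>\<^bsub>FGs\<^esub> y" using xy FG.rcos_self[OF xy(1) Nn.subgroup_axioms] by simp
    then have "x \<otimes>\<^bsub>FGs\<^esub> inv\<^bsub>FGs\<^esub> y \<in> N" using Nn.rcos_module_imp[OF FG.is_group xy(2)] by simp
    then have "ev K h (x \<otimes>\<^bsub>FGs\<^esub> inv\<^bsub>FGs\<^esub> y) = \<one>\<^bsub>K\<^esub>" using E.ev_nc[OF R_carr evR] by blast
    moreover have "ev K h (x \<otimes>\<^bsub>FGs\<^esub> inv\<^bsub>FGs\<^esub> y) = ev K h x \<otimes>\<^bsub>K\<^esub> inv\<^bsub>K\<^esub> ev K h y"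
    proof -
      interpret EH: group_hom FGs K "ev K h" unfolding group_hom_def group_hom_axioms_def
        using ev_hom K FG.is_group by simp
      show ?thesis using xy by simp
    qed
    ultimately show ?thesis using xy ev_hom
      by (metis E.K.inv_equality E.K.inv_inv E.K.r_inv hom_in_carrier E.K.inv_closed)
  qed
  obtain \<psi> where \<psi>: "\<psi> \<in> hom (FGs Mod N) K" "\<And>x. x \<in> carrier FGs \<Longrightarrow> \<psi> (N #>\<^bsub>FGs\<^esub> x) = ev K h x"
    using FactGroup_universal[OF ev_hom N_normal resp] by blast
  show ?thesis
  proof (intro exI conjI ballI)
    show "\<psi> \<in> hom AP K" using \<psi>(1) by (simp add: amalgamated_product_def)
    fix a assume "a \<in> carrier A"
    then have "[(Inl a, True)] \<in> carrier FGs" by (intro letter_carr) auto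
    then show "\<psi> (i1 A B C f g a) = \<alpha> a" using \<psi>(2) aK \<open>a \<in> carrier A\<close>
      by (simp add: i1_def ev_Cons lt_def h_def)
  next
    fix b assume "b \<in> carrier B"
    then have "[(Inr b, True)] \<in> carrier FGs" by (intro letter_carr) auto
    then show "\<psi> (i2 A B C f g b) = \<beta> b" using \<psi>(2) bK \<open>b \<in> carrier B\<close>
      by (simp add: i2_def ev_Cons lt_def h_def)
  qed
qed

end

theorem i1_inj:
  fixes A :: "('a, 'm) monoid_scheme" and B :: "('b, 'n) monoid_scheme" and C :: "('c, 'k) monoid_scheme"
  assumes A: "group A" and B: "group B" and C: "group C"
    and hf: "f \<in> hom C A" "inj_on f (carrier C)"
    and hg: "g \<in> hom C B" "inj_on g (carrier C)"
    and a: "a \<in> carrier A" "a' \<in> carrier A" and eq: "i1 A B C f g a = i1 A B C f g a'"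
  shows "a = a'"
proof -
  interpret amal A B C f g unfolding amal_def amal_axioms_def using A B hf hg by (auto simp: hom_def)
  obtain K :: "('c \<times> 'a set \<times> 'b set \<Rightarrow> 'c \<times> 'a set \<times> 'b set) monoid" and \<alpha> \<beta> where K: "group K" "\<alpha> \<in> hom A K" "inj_on \<alpha> (carrier A)" "\<beta> \<in> hom B K"
    "\<forall>c\<in>carrier C. \<alpha> (f c) = \<beta> (g c)"
    using amalg_target[OF A B C hf hg] by blast
  obtain \<psi> where "\<forall>a\<in>carrier A. \<psi> (i1 A B C f g a) = \<alpha> a"
    using universal[OF K(1,2,4)] K(5) by blast
  then have "\<alpha> a = \<alpha> a'" using eq a by metis
  then show ?thesis using K(3) a by (meson inj_onD)
qed



lemma cyclic_group_group: "0 < p \<Longrightarrow> group (cyclic_group p)"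
proof (rule groupI)
  assume p: "0 < p"
  show "x \<otimes>\<^bsub>cyclic_group p\<^esub> y \<in> carrier (cyclic_group p)" for x y
    using p by (simp add: cyclic_group_def)
  show "\<one>\<^bsub>cyclic_group p\<^esub> \<in> carrier (cyclic_group p)" using p by (simp add: cyclic_group_def)
  show "x \<otimes>\<^bsub>cyclic_group p\<^esub> y \<otimes>\<^bsub>cyclic_group p\<^esub> z = x \<otimes>\<^bsub>cyclic_group p\<^esub> (y \<otimes>\<^bsub>cyclic_group p\<^esub> z)" for x y z
    by (simp add: cyclic_group_def mod_add_left_eq mod_add_right_eq add.assoc)
  show "\<one>\<^bsub>cyclic_group p\<^esub> \<otimes>\<^bsub>cyclic_group p\<^esub> x = x" if "x \<in> carrier (cyclic_group p)" for x
    using that by (simp add: cyclic_group_def)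
  show "\<exists>y\<in>carrier (cyclic_group p). y \<otimes>\<^bsub>cyclic_group p\<^esub> x = \<one>\<^bsub>cyclic_group p\<^esub>"
    if "x \<in> carrier (cyclic_group p)" for x
  proof (intro bexI)
    show "(p - x) mod p \<otimes>\<^bsub>cyclic_group p\<^esub> x = \<one>\<^bsub>cyclic_group p\<^esub>"
      using that by (simp add: cyclic_group_def mod_add_left_eq)
    show "(p - x) mod p \<in> carrier (cyclic_group p)" using p by (simp add: cyclic_group_def)
  qed
qed

lemma sd_group:
  assumes N: "group N" and H: "group H"
    and ph: "\<And>h. h \<in> carrier H \<Longrightarrow> \<phi> h \<in> hom N N"
    and pm: "\<And>h1 h2 x. h1 \<in> carrier H \<Longrightarrow> h2 \<in> carrier H \<Longrightarrow> x \<in> carrier N \<Longrightarrow>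
               \<phi> (h1 \<otimes>\<^bsub>H\<^esub> h2) x = \<phi> h1 (\<phi> h2 x)"
    and p1: "\<And>x. x \<in> carrier N \<Longrightarrow> \<phi> \<one>\<^bsub>H\<^esub> x = x"
  shows "group (semidirect_product N H \<phi>)"
proof -
  interpret N: group N by (rule N)
  interpret H: group H by (rule H)
  have pc: "\<phi> h x \<in> carrier N" if "h \<in> carrier H" "x \<in> carrier N" for h x
    using ph[OF that(1)] that(2) by (auto simp: hom_def)
  have pmul: "\<phi> h (x \<otimes>\<^bsub>N\<^esub> y) = \<phi> h x \<otimes>\<^bsub>N\<^esub> \<phi> h y" if "h \<in> carrier H" "x \<in> carrier N" "y \<in> carrier N" for h x y
    using ph[OF that(1)] that(2,3) by (simp add: hom_mult)
  have pone: "\<phi> h \<one>\<^bsub>N\<^esub> = \<one>\<^bsub>N\<^esub>" if "h \<in> carrier H" for h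
  proof -
    interpret gh: group_hom N N "\<phi> h" unfolding group_hom_def group_hom_axioms_def
      using ph[OF that] N by simp
    show ?thesis by simp
  qed
  show ?thesis
  proof (rule groupI)
    fix x y assume "x \<in> carrier (semidirect_product N H \<phi>)" "y \<in> carrier (semidirect_product N H \<phi>)"
    then show "x \<otimes>\<^bsub>semidirect_product N H \<phi>\<^esub> y \<in> carrier (semidirect_product N H \<phi>)"
      by (auto simp: semidirect_product_def pc split: prod.splits)
  next
    show "\<one>\<^bsub>semidirect_product N H \<phi>\<^esub> \<in> carrier (semidirect_product N H \<phi>)"
      by (simp add: semidirect_product_def)
  next
    fix x y z assume "x \<in> carrier (semidirect_product N H \<phi>)" "y \<in> carrier (semidirect_product N H \<phi>)"
      "z \<in> carrier (semidirect_product N H \<phi>)"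
    then obtain n1 h1 n2 h2 n3 h3 where xyz: "x = (n1, h1)" "y = (n2, h2)" "z = (n3, h3)"
      "n1 \<in> carrier N" "n2 \<in> carrier N" "n3 \<in> carrier N" "h1 \<in> carrier H" "h2 \<in> carrier H" "h3 \<in> carrier H"
      by (auto simp: semidirect_product_def)
    then show "x \<otimes>\<^bsub>semidirect_product N H \<phi>\<^esub> y \<otimes>\<^bsub>semidirect_product N H \<phi>\<^esub> z =
               x \<otimes>\<^bsub>semidirect_product N H \<phi>\<^esub> (y \<otimes>\<^bsub>semidirect_product N H \<phi>\<^esub> z)"
      by (simp add: semidirect_product_def pc pmul pm N.m_assoc H.m_assoc)
  next
    fix x assume "x \<in> carrier (semidirect_product N H \<phi>)"
    then show "\<one>\<^bsub>semidirect_product N H \<phi>\<^esub> \<otimes>\<^bsub>semidirect_product N H \<phi>\<^esub> x = x"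
      by (auto simp: semidirect_product_def p1)
  next
    fix x assume "x \<in> carrier (semidirect_product N H \<phi>)"
    then obtain n h where x: "x = (n, h)" "n \<in> carrier N" "h \<in> carrier H"
      by (auto simp: semidirect_product_def)
    show "\<exists>y\<in>carrier (semidirect_product N H \<phi>). y \<otimes>\<^bsub>semidirect_product N H \<phi>\<^esub> x = \<one>\<^bsub>semidirect_product N H \<phi>\<^esub>"
    proof (intro bexI)
      have "\<phi> (inv\<^bsub>H\<^esub> h) (inv\<^bsub>N\<^esub> n) \<otimes>\<^bsub>N\<^esub> \<phi> (inv\<^bsub>H\<^esub> h) n = \<phi> (inv\<^bsub>H\<^esub> h) (inv\<^bsub>N\<^esub> n \<otimes>\<^bsub>N\<^esub> n)"
        by (rule pmul[symmetric]) (use x in auto)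
      also have "\<dots> = \<one>\<^bsub>N\<^esub>" using x by (simp add: pone)
      finally show "(\<phi> (inv\<^bsub>H\<^esub> h) (inv\<^bsub>N\<^esub> n), inv\<^bsub>H\<^esub> h) \<otimes>\<^bsub>semidirect_product N H \<phi>\<^esub> x = \<one>\<^bsub>semidirect_product N H \<phi>\<^esub>"
        using x by (simp add: semidirect_product_def)
      show "(\<phi> (inv\<^bsub>H\<^esub> h) (inv\<^bsub>N\<^esub> n), inv\<^bsub>H\<^esub> h) \<in> carrier (semidirect_product N H \<phi>)"
        using x by (simp add: semidirect_product_def pc)
    qed
  qed
qed

lemma auto_action:
  assumes N: "group N" and H: "group H" and act: "\<phi> \<in> hom H (AutoGroup N)"
  shows "\<And>h. h \<in> carrier H \<Longrightarrow> \<phi> h \<in> hom N N"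
    and "\<And>h1 h2 x. h1 \<in> carrier H \<Longrightarrow> h2 \<in> carrier H \<Longrightarrow> x \<in> carrier N \<Longrightarrow>
               \<phi> (h1 \<otimes>\<^bsub>H\<^esub> h2) x = \<phi> h1 (\<phi> h2 x)"
    and "\<And>x. x \<in> carrier N \<Longrightarrow> \<phi> \<one>\<^bsub>H\<^esub> x = x"
proof -
  interpret N: group N by (rule N)
  interpret gh: group_hom H "AutoGroup N" \<phi> unfolding group_hom_def group_hom_axioms_def
    using H N.AutoGroup act by simp
  have c: "\<phi> h \<in> auto N" if "h \<in> carrier H" for h
    using gh.hom_closed[OF that] by (simp add: AutoGroup_def)
  show "\<phi> h \<in> hom N N" if "h \<in> carrier H" for h using c[OF that] by (simp add: auto_def)
  show "\<phi> (h1 \<otimes>\<^bsub>H\<^esub> h2) x = \<phi> h1 (\<phi> h2 x)" if "h1 \<in> carrier H" "h2 \<in> carrier H" "x \<in> carrier N" for h1 h2 x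
  proof -
    have "\<phi> (h1 \<otimes>\<^bsub>H\<^esub> h2) = \<phi> h1 \<otimes>\<^bsub>AutoGroup N\<^esub> \<phi> h2" using that by simp
    also have "\<dots> = compose (carrier N) (\<phi> h1) (\<phi> h2)"
      using c[OF that(1)] c[OF that(2)] by (simp add: AutoGroup_def BijGroup_def auto_def)
    finally show ?thesis using that(3) by (simp add: compose_def)
  qed
  show "\<phi> \<one>\<^bsub>H\<^esub> x = x" if "x \<in> carrier N" for x
  proof -
    have "\<phi> \<one>\<^bsub>H\<^esub> = \<one>\<^bsub>AutoGroup N\<^esub>" by simp
    then show ?thesis using that by (simp add: AutoGroup_def BijGroup_def)
  qed
qed



lemma arith_aux:
  fixes x y p :: nat
  assumes "y < p" "x < p" "y \<noteq> x"
  shows "(y + (p - x) mod p) mod p \<noteq> 0"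
proof (cases "x = 0")
  case True then show ?thesis using assms by simp
next
  case False
  then have e: "(p - x) mod p = p - x" using assms by simp
  show ?thesis
  proof
    assume h: "(y + (p - x) mod p) mod p = 0"
    have lo: "0 < y + (p - x)" "y + (p - x) < 2 * p" using assms False by auto
    from h e obtain q where q: "y + (p - x) = p * q" by (auto elim!: dvdE simp: mod_eq_0_iff_dvd)
    have "p * q < p * 2" using lo q by simp
    then have "q < 2" by (simp only: mult_less_cancel1)
    moreover have "q \<noteq> 0" using lo q by auto
    ultimately have "q = 1" by simp
    then show False using q assms by simp
  qed
qed

lemma replicate_in_F: "k0 < n \<Longrightarrow> replicate k (k0, True) \<in> carrier (F n)"
  by (auto simp: free_group_def reduced_def cancels_def)

lemma F_infinite:
  assumes "h \<in> carrier (F n)" "h \<noteq> []"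
  shows "infinite (carrier (F n))"
proof -
  obtain k0 b where "(k0, b) \<in> set h" using assms(2) by (cases h) auto
  then have k0: "k0 < n" using assms(1) by (force simp: free_group_def)
  have "inj (\<lambda>k. replicate k (k0, True))" by (rule injI) simp
  moreover have "range (\<lambda>k. replicate k (k0, True)) \<subseteq> carrier (F n)" using replicate_in_F[OF k0] by auto
  ultimately show ?thesis using range_inj_infinite infinite_super by blast
qed


lemma (in group) conj_inv: "d \<in> carrier G \<Longrightarrow> g \<in> carrier G \<Longrightarrow> d \<otimes> inv g \<otimes> inv d = inv (d \<otimes> g \<otimes> inv d)"
  by (simp add: inv_mult_group m_assoc)

lemma (in group) conj_mult: "d \<in> carrier G \<Longrightarrow> g1 \<in> carrier G \<Longrightarrow> g2 \<in> carrier G \<Longrightarrow>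
    d \<otimes> (g1 \<otimes> g2) \<otimes> inv d = (d \<otimes> g1 \<otimes> inv d) \<otimes> (d \<otimes> g2 \<otimes> inv d)"
  by (simp add: m_assoc[symmetric]) (simp add: m_assoc)

lemma (in group) conj_conj: "d \<in> carrier G \<Longrightarrow> x \<in> carrier G \<Longrightarrow> g \<in> carrier G \<Longrightarrow>
    d \<otimes> (x \<otimes> g \<otimes> inv x) \<otimes> inv d = (d \<otimes> x) \<otimes> g \<otimes> inv (d \<otimes> x)"
  by (simp add: m_assoc inv_mult_group)

lemma (in group) one_of_mult_inv: "a \<in> carrier G \<Longrightarrow> b \<in> carrier G \<Longrightarrow> a \<otimes> inv b = \<one> \<Longrightarrow> a = b"
  by (metis inv_closed inv_equality inv_inv)

theorem proposition4p2:
  fixes V1 :: "'v set" and E1 :: "'v \<Rightarrow> 'v \<Rightarrow> bool"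
    and V2 :: "'w set" and E2 :: "'w \<Rightarrow> 'w \<Rightarrow> bool"
    and n m p :: nat
    and i j :: "(nat \<times> bool) list \<Rightarrow> (nat \<times> bool) list"
    and \<rho> :: "((((nat \<times> bool) list + (nat \<times> bool) list) \<times> bool) list set) \<Rightarrow> ('v \<Rightarrow> 'v) \<times> ('w \<Rightarrow> 'w)"
    and \<phi> :: "(nat \<times> bool) list \<Rightarrow> nat \<Rightarrow> nat"
  assumes T1: "is_tree V1 E1" "locally_finite V1 E1"
    and T2: "is_tree V2 E2" "locally_finite V2 E2"
    and i_emb: "i \<in> hom (F m) (F n)" "inj_on i (carrier (F m))"
    and j_emb: "j \<in> hom (F m) (F n)" "inj_on j (carrier (F m))"
    and simple: "simple_grp (amalgamated_product (F n) (F n) (F m) i j)"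
    and lattice: "\<rho> \<in> hom (amalgamated_product (F n) (F n) (F m) i j)
                          (tree_aut V1 E1 \<times>\<times> tree_aut V2 E2)"
                 "inj_on \<rho> (carrier (amalgamated_product (F n) (F n) (F m) i j))"
                 "uniform_lattice (tree_aut V1 E1 \<times>\<times> tree_aut V2 E2)
                    (prod_topology (tree_aut_topology V1 E1) (tree_aut_topology V2 E2))
                    (\<rho> ` carrier (amalgamated_product (F n) (F n) (F m) i j))"
    and p: "Factorial_Ring.prime p"
    and act: "\<phi> \<in> hom (F n) (AutoGroup (cyclic_group p))"
    and nontriv: "\<exists>h\<in>carrier (F n). \<exists>x\<in>carrier (cyclic_group p). \<phi> h x \<noteq> x"
  shows "\<not> virtually_torsion_free
           (amalgamated_product
              (semidirect_product (cyclic_group p) (F n) \<phi>)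
              (semidirect_product (cyclic_group p) (F n) \<phi>)
              (F m)
              (\<lambda>c. (0, i c)) (\<lambda>c. (0, j c)))"
proof
  define Zp where "Zp = cyclic_group p"
  define A where "A = semidirect_product (cyclic_group p) (F n) \<phi>"
  define fi where "fi = (\<lambda>c::(nat \<times> bool) list. (0::nat, i c))"
  define fj where "fj = (\<lambda>c::(nat \<times> bool) list. (0::nat, j c))"
  define \<Lambda> where "\<Lambda> = amalgamated_product (F n) (F n) (F m) i j"
  define \<Gamma> where "\<Gamma> = amalgamated_product A A (F m) fi fj"
  assume vtf: "virtually_torsion_free
           (amalgamated_product
              (semidirect_product (cyclic_group p) (F n) \<phi>)
              (semidirect_product (cyclic_group p) (F n) \<phi>)
              (F m)
              (\<lambda>c. (0, i c)) (\<lambda>c. (0, j c)))"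
  then obtain H where H: "subgroup H \<Gamma>" "finite (rcosets\<^bsub>\<Gamma>\<^esub> H)" "torsion_free \<Gamma> H"
    unfolding virtually_torsion_free_def \<Gamma>_def A_def fi_def fj_def by blast
  have p0: "0 < p" using p prime_gt_0_nat by blast
  have gZ: "group Zp" unfolding Zp_def using p0 by (rule cyclic_group_group)
  have gFn: "group (F n)" and gFm: "group (F m)" by (rule free_group_group)+
  note actf = auto_action[OF gZ[unfolded Zp_def] gFn act]
  have gA: "group A" unfolding A_def by (rule sd_group[OF gZ[unfolded Zp_def] gFn actf])
  have Zc: "carrier Zp = {0..<p}" by (simp add: Zp_def cyclic_group_def)
  have phc: "\<phi> h x < p" if "h \<in> carrier (F n)" "x < p" for h x
    using actf(1)[OF that(1)] that(2) by (auto simp: hom_def cyclic_group_def)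
  have ph0: "\<phi> h 0 = 0" if "h \<in> carrier (F n)" for h
  proof -
    interpret gh: group_hom Zp Zp "\<phi> h" unfolding group_hom_def group_hom_axioms_def
      using actf(1)[OF that] gZ by (simp add: Zp_def)
    show ?thesis using gh.hom_one by (simp add: Zp_def cyclic_group_def)
  qed
  have ph1: "\<phi> [] x = x" if "x < p" for x
    using actf(3)[of x] that by (simp add: free_group_def cyclic_group_def)
  have Amul: "(a, h) \<otimes>\<^bsub>A\<^esub> (b, k) = ((a + \<phi> h b) mod p, reduce (h @ k))" for a b h k
    by (simp add: A_def semidirect_product_def cyclic_group_def free_group_def)
  have Aone: "\<one>\<^bsub>A\<^esub> = (0, [])" by (simp add: A_def semidirect_product_def cyclic_group_def free_group_def)
  have Acarr: "(a, h) \<in> carrier A \<longleftrightarrow> a < p \<and> h \<in> carrier (F n)" for a h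
    by (simp add: A_def semidirect_product_def cyclic_group_def)
  have ic: "i c \<in> carrier (F n)" if "c \<in> carrier (F m)" for c using i_emb(1) that by (auto simp: hom_def)
  have jc: "j c \<in> carrier (F n)" if "c \<in> carrier (F m)" for c using j_emb(1) that by (auto simp: hom_def)
  have fi_hom: "fi \<in> hom (F m) A"
  proof (rule homI)
    fix c assume "c \<in> carrier (F m)" then show "fi c \<in> carrier A" using ic p0 by (simp add: fi_def Acarr)
  next
    fix c d assume cd: "c \<in> carrier (F m)" "d \<in> carrier (F m)"
    have "i (c \<otimes>\<^bsub>F m\<^esub> d) = i c \<otimes>\<^bsub>F n\<^esub> i d" using i_emb(1) cd by (simp add: hom_mult)
    then show "fi (c \<otimes>\<^bsub>F m\<^esub> d) = fi c \<otimes>\<^bsub>A\<^esub> fi d"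
      using cd ic ph0 by (simp add: fi_def Amul free_group_def)
  qed
  have fj_hom: "fj \<in> hom (F m) A"
  proof (rule homI)
    fix c assume "c \<in> carrier (F m)" then show "fj c \<in> carrier A" using jc p0 by (simp add: fj_def Acarr)
  next
    fix c d assume cd: "c \<in> carrier (F m)" "d \<in> carrier (F m)"
    have "j (c \<otimes>\<^bsub>F m\<^esub> d) = j c \<otimes>\<^bsub>F n\<^esub> j d" using j_emb(1) cd by (simp add: hom_mult)
    then show "fj (c \<otimes>\<^bsub>F m\<^esub> d) = fj c \<otimes>\<^bsub>A\<^esub> fj d"
      using cd jc ph0 by (simp add: fj_def Amul free_group_def)
  qed
  have fi_inj: "inj_on fi (carrier (F m))" using i_emb(2) by (auto simp: fi_def inj_on_def)
  have fj_inj: "inj_on fj (carrier (F m))" using j_emb(2) by (auto simp: fj_def inj_on_def)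
  interpret LA: amal "F n" "F n" "F m" i j
    unfolding amal_def amal_axioms_def using gFn i_emb j_emb by (auto simp: hom_def)
  interpret GA: amal A A "F m" fi fj
    unfolding amal_def amal_axioms_def using gA fi_hom fj_hom by (auto simp: hom_def)
  have gL: "group \<Lambda>" unfolding \<Lambda>_def by (rule LA.group_AP)
  have gG: "group \<Gamma>" unfolding \<Gamma>_def by (rule GA.group_AP)
  interpret L: group \<Lambda> by (rule gL)
  interpret G: group \<Gamma> by (rule gG)
  define \<alpha> where "\<alpha> h = i1 A A (F m) fi fj (0, h)" for h
  define \<beta> where "\<beta> h = i2 A A (F m) fi fj (0, h)" for h
  have \<alpha>_hom: "\<alpha> \<in> hom (F n) \<Gamma>"
  proof (rule homI)
    fix h assume "h \<in> carrier (F n)"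
    then show "\<alpha> h \<in> carrier \<Gamma>" unfolding \<alpha>_def \<Gamma>_def using p0 by (intro GA.i1_carr) (simp add: Acarr)
  next
    fix h k assume hk: "h \<in> carrier (F n)" "k \<in> carrier (F n)"
    have "\<alpha> h \<otimes>\<^bsub>\<Gamma>\<^esub> \<alpha> k = i1 A A (F m) fi fj ((0, h) \<otimes>\<^bsub>A\<^esub> (0, k))"
      unfolding \<alpha>_def \<Gamma>_def using hk p0 by (intro GA.i1_mult) (auto simp: Acarr)
    also have "(0, h) \<otimes>\<^bsub>A\<^esub> (0, k) = (0, h \<otimes>\<^bsub>F n\<^esub> k)" using hk ph0 by (simp add: Amul free_group_def)
    finally show "\<alpha> (h \<otimes>\<^bsub>F n\<^esub> k) = \<alpha> h \<otimes>\<^bsub>\<Gamma>\<^esub> \<alpha> k" by (simp add: \<alpha>_def)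
  qed
  have \<beta>_hom: "\<beta> \<in> hom (F n) \<Gamma>"
  proof (rule homI)
    fix h assume "h \<in> carrier (F n)"
    then show "\<beta> h \<in> carrier \<Gamma>" unfolding \<beta>_def \<Gamma>_def using p0 by (intro GA.i2_carr) (simp add: Acarr)
  next
    fix h k assume hk: "h \<in> carrier (F n)" "k \<in> carrier (F n)"
    have "\<beta> h \<otimes>\<^bsub>\<Gamma>\<^esub> \<beta> k = i2 A A (F m) fi fj ((0, h) \<otimes>\<^bsub>A\<^esub> (0, k))"
      unfolding \<beta>_def \<Gamma>_def using hk p0 by (intro GA.i2_mult) (auto simp: Acarr)
    also have "(0, h) \<otimes>\<^bsub>A\<^esub> (0, k) = (0, h \<otimes>\<^bsub>F n\<^esub> k)" using hk ph0 by (simp add: Amul free_group_def)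
    finally show "\<beta> (h \<otimes>\<^bsub>F n\<^esub> k) = \<beta> h \<otimes>\<^bsub>\<Gamma>\<^esub> \<beta> k" by (simp add: \<beta>_def)
  qed
  have compat: "\<alpha> (i c) = \<beta> (j c)" if "c \<in> carrier (F m)" for c
    using GA.i1_f[OF that] by (simp add: \<alpha>_def \<beta>_def fi_def fj_def)
  obtain \<psi> where \<psi>: "\<psi> \<in> hom \<Lambda> \<Gamma>" "\<forall>h\<in>carrier (F n). \<psi> (i1 (F n) (F n) (F m) i j h) = \<alpha> h"
    using LA.universal[OF gG \<alpha>_hom \<beta>_hom compat] unfolding \<Lambda>_def by blast
  interpret PS: group_hom \<Lambda> \<Gamma> \<psi> unfolding group_hom_def group_hom_axioms_def
    using gL gG \<psi>(1) by simp
  define core where "core = {g \<in> carrier \<Gamma>. \<forall>d\<in>carrier \<Gamma>. d \<otimes>\<^bsub>\<Gamma>\<^esub> g \<otimes>\<^bsub>\<Gamma>\<^esub> inv\<^bsub>\<Gamma>\<^esub> d \<in> H}"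
  define S where "S = {l \<in> carrier \<Lambda>. \<psi> l \<in> core}"
  have Hc: "H \<subseteq> carrier \<Gamma>" using H(1) subgroup.subset by blast
  have coreI: "g \<in> core" if "g \<in> carrier \<Gamma>" "\<And>d. d \<in> carrier \<Gamma> \<Longrightarrow> d \<otimes>\<^bsub>\<Gamma>\<^esub> g \<otimes>\<^bsub>\<Gamma>\<^esub> inv\<^bsub>\<Gamma>\<^esub> d \<in> H" for g
    using that by (simp add: core_def)
  have coreD: "d \<otimes>\<^bsub>\<Gamma>\<^esub> g \<otimes>\<^bsub>\<Gamma>\<^esub> inv\<^bsub>\<Gamma>\<^esub> d \<in> H" if "g \<in> core" "d \<in> carrier \<Gamma>" for g d
    using that by (simp add: core_def)
  have core_c: "g \<in> carrier \<Gamma>" if "g \<in> core" for g using that by (simp add: core_def)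
  have Ssub: "subgroup S \<Lambda>"
  proof (rule L.subgroupI)
    show "S \<subseteq> carrier \<Lambda>" by (auto simp: S_def)
    have "\<one>\<^bsub>\<Lambda>\<^esub> \<in> S" unfolding S_def
      using subgroup.one_closed[OF H(1)] by (auto intro!: coreI)
    then show "S \<noteq> {}" by blast
  next
    fix a assume a: "a \<in> S"
    then have ac: "a \<in> carrier \<Lambda>" "\<psi> a \<in> core" by (auto simp: S_def)
    show "inv\<^bsub>\<Lambda>\<^esub> a \<in> S" unfolding S_def
    proof (intro CollectI conjI coreI)
      show "inv\<^bsub>\<Lambda>\<^esub> a \<in> carrier \<Lambda>" using ac by simp
      show "\<psi> (inv\<^bsub>\<Lambda>\<^esub> a) \<in> carrier \<Gamma>" using ac by simp
      fix d assume d: "d \<in> carrier \<Gamma>"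
      have "d \<otimes>\<^bsub>\<Gamma>\<^esub> \<psi> (inv\<^bsub>\<Lambda>\<^esub> a) \<otimes>\<^bsub>\<Gamma>\<^esub> inv\<^bsub>\<Gamma>\<^esub> d = inv\<^bsub>\<Gamma>\<^esub> (d \<otimes>\<^bsub>\<Gamma>\<^esub> \<psi> a \<otimes>\<^bsub>\<Gamma>\<^esub> inv\<^bsub>\<Gamma>\<^esub> d)"
        using ac d by (simp add: G.conj_inv)
      then show "d \<otimes>\<^bsub>\<Gamma>\<^esub> \<psi> (inv\<^bsub>\<Lambda>\<^esub> a) \<otimes>\<^bsub>\<Gamma>\<^esub> inv\<^bsub>\<Gamma>\<^esub> d \<in> H"
        using coreD[OF ac(2) d] subgroup.m_inv_closed[OF H(1)] by simp
    qed
  next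
    fix a b assume ab: "a \<in> S" "b \<in> S"
    then have c: "a \<in> carrier \<Lambda>" "\<psi> a \<in> core" "b \<in> carrier \<Lambda>" "\<psi> b \<in> core" by (auto simp: S_def)
    show "a \<otimes>\<^bsub>\<Lambda>\<^esub> b \<in> S" unfolding S_def
    proof (intro CollectI conjI coreI)
      show "a \<otimes>\<^bsub>\<Lambda>\<^esub> b \<in> carrier \<Lambda>" using c by simp
      show "\<psi> (a \<otimes>\<^bsub>\<Lambda>\<^esub> b) \<in> carrier \<Gamma>" using c by simp
      fix d assume d: "d \<in> carrier \<Gamma>"
      have "d \<otimes>\<^bsub>\<Gamma>\<^esub> \<psi> (a \<otimes>\<^bsub>\<Lambda>\<^esub> b) \<otimes>\<^bsub>\<Gamma>\<^esub> inv\<^bsub>\<Gamma>\<^esub> d =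
          (d \<otimes>\<^bsub>\<Gamma>\<^esub> \<psi> a \<otimes>\<^bsub>\<Gamma>\<^esub> inv\<^bsub>\<Gamma>\<^esub> d) \<otimes>\<^bsub>\<Gamma>\<^esub> (d \<otimes>\<^bsub>\<Gamma>\<^esub> \<psi> b \<otimes>\<^bsub>\<Gamma>\<^esub> inv\<^bsub>\<Gamma>\<^esub> d)"
        using c d by (simp add: G.conj_mult)
      then show "d \<otimes>\<^bsub>\<Gamma>\<^esub> \<psi> (a \<otimes>\<^bsub>\<Lambda>\<^esub> b) \<otimes>\<^bsub>\<Gamma>\<^esub> inv\<^bsub>\<Gamma>\<^esub> d \<in> H"
        using coreD[OF c(2) d] coreD[OF c(4) d] subgroup.m_closed[OF H(1)] by simp
    qed
  qed
  have Snormal: "S \<lhd> \<Lambda>"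
  proof (rule L.normal_invI[OF Ssub])
    fix x a assume xa: "x \<in> carrier \<Lambda>" "a \<in> S"
    then have c: "a \<in> carrier \<Lambda>" "\<psi> a \<in> core" by (auto simp: S_def)
    show "x \<otimes>\<^bsub>\<Lambda>\<^esub> a \<otimes>\<^bsub>\<Lambda>\<^esub> inv\<^bsub>\<Lambda>\<^esub> x \<in> S" unfolding S_def
    proof (intro CollectI conjI coreI)
      show "x \<otimes>\<^bsub>\<Lambda>\<^esub> a \<otimes>\<^bsub>\<Lambda>\<^esub> inv\<^bsub>\<Lambda>\<^esub> x \<in> carrier \<Lambda>" using c xa by simp
      show "\<psi> (x \<otimes>\<^bsub>\<Lambda>\<^esub> a \<otimes>\<^bsub>\<Lambda>\<^esub> inv\<^bsub>\<Lambda>\<^esub> x) \<in> carrier \<Gamma>" using c xa by simp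
      fix d assume d: "d \<in> carrier \<Gamma>"
      have "d \<otimes>\<^bsub>\<Gamma>\<^esub> \<psi> (x \<otimes>\<^bsub>\<Lambda>\<^esub> a \<otimes>\<^bsub>\<Lambda>\<^esub> inv\<^bsub>\<Lambda>\<^esub> x) \<otimes>\<^bsub>\<Gamma>\<^esub> inv\<^bsub>\<Gamma>\<^esub> d =
          (d \<otimes>\<^bsub>\<Gamma>\<^esub> \<psi> x) \<otimes>\<^bsub>\<Gamma>\<^esub> \<psi> a \<otimes>\<^bsub>\<Gamma>\<^esub> inv\<^bsub>\<Gamma>\<^esub> (d \<otimes>\<^bsub>\<Gamma>\<^esub> \<psi> x)"
        using c d xa by (simp add: G.conj_conj)
      then show "d \<otimes>\<^bsub>\<Gamma>\<^esub> \<psi> (x \<otimes>\<^bsub>\<Lambda>\<^esub> a \<otimes>\<^bsub>\<Lambda>\<^esub> inv\<^bsub>\<Lambda>\<^esub> x) \<otimes>\<^bsub>\<Gamma>\<^esub> inv\<^bsub>\<Gamma>\<^esub> d \<in> H"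
        using coreD[OF c(2), of "d \<otimes>\<^bsub>\<Gamma>\<^esub> \<psi> x"] d xa by simp
    qed
  qed
  have "S = carrier \<Lambda> \<or> S = {\<one>\<^bsub>\<Lambda>\<^esub>}" using simple Snormal by (simp add: simple_grp_def \<Lambda>_def)
  obtain h0 x0 where h0: "h0 \<in> carrier (F n)" "x0 < p" "\<phi> h0 x0 \<noteq> x0"
    using nontriv by (auto simp: cyclic_group_def)
  then consider "S = {\<one>\<^bsub>\<Lambda>\<^esub>}" | "S = carrier \<Lambda>" using \<open>S = carrier \<Lambda> \<or> S = {\<one>\<^bsub>\<Lambda>\<^esub>}\<close> by blast
  then show False
  proof cases
    case 1
    have h0ne: "h0 \<noteq> []" using h0 ph1 by auto
    have infFn: "infinite (carrier (F n))" by (rule F_infinite[OF h0(1) h0ne])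
    have i1L_inj: "inj_on (i1 (F n) (F n) (F m) i j) (carrier (F n))"
      by (rule inj_onI, rule i1_inj[OF gFn gFn gFm i_emb j_emb]) auto
    have "i1 (F n) (F n) (F m) i j ` carrier (F n) \<subseteq> carrier \<Lambda>"
      unfolding \<Lambda>_def using LA.i1_carr by blast
    then have infL: "infinite (carrier \<Lambda>)"
      using infFn i1L_inj finite_imageD infinite_super by blast
    define Fmap where "Fmap l = (\<lambda>Y\<in>(rcosets\<^bsub>\<Gamma>\<^esub> H). Y #>\<^bsub>\<Gamma>\<^esub> \<psi> l)" for l
    have Fmap_in: "Fmap ` carrier \<Lambda> \<subseteq> PiE (rcosets\<^bsub>\<Gamma>\<^esub> H) (\<lambda>_. rcosets\<^bsub>\<Gamma>\<^esub> H)"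
    proof
      fix F0 assume "F0 \<in> Fmap ` carrier \<Lambda>"
      then obtain l where l: "l \<in> carrier \<Lambda>" "F0 = Fmap l" by blast
      show "F0 \<in> PiE (rcosets\<^bsub>\<Gamma>\<^esub> H) (\<lambda>_. rcosets\<^bsub>\<Gamma>\<^esub> H)"
      proof (unfold l(2) Fmap_def, rule restrict_PiE_iff[THEN iffD2], intro ballI)
        fix Y assume "Y \<in> rcosets\<^bsub>\<Gamma>\<^esub> H"
        then obtain d where d: "d \<in> carrier \<Gamma>" "Y = H #>\<^bsub>\<Gamma>\<^esub> d" by (auto simp: RCOSETS_def)
        have "Y #>\<^bsub>\<Gamma>\<^esub> \<psi> l = H #>\<^bsub>\<Gamma>\<^esub> (d \<otimes>\<^bsub>\<Gamma>\<^esub> \<psi> l)"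
          using d l Hc by (simp add: G.coset_mult_assoc)
        then show "Y #>\<^bsub>\<Gamma>\<^esub> \<psi> l \<in> rcosets\<^bsub>\<Gamma>\<^esub> H"
          using d l Hc G.rcosetsI by simp
      qed
    qed
    have "finite (PiE (rcosets\<^bsub>\<Gamma>\<^esub> H) (\<lambda>_. rcosets\<^bsub>\<Gamma>\<^esub> H))" using H(2) by (simp add: finite_PiE)
    then have "finite (Fmap ` carrier \<Lambda>)" using Fmap_in finite_subset by blast
    then have "\<not> inj_on Fmap (carrier \<Lambda>)" using infL finite_imageD by blast
    then obtain l1 l2 where l12: "l1 \<in> carrier \<Lambda>" "l2 \<in> carrier \<Lambda>" "l1 \<noteq> l2" "Fmap l1 = Fmap l2"
      unfolding inj_on_def by blast
    have "l1 \<otimes>\<^bsub>\<Lambda>\<^esub> inv\<^bsub>\<Lambda>\<^esub> l2 \<in> S" unfolding S_def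
    proof (intro CollectI conjI coreI)
      show "l1 \<otimes>\<^bsub>\<Lambda>\<^esub> inv\<^bsub>\<Lambda>\<^esub> l2 \<in> carrier \<Lambda>" using l12 by simp
      show "\<psi> (l1 \<otimes>\<^bsub>\<Lambda>\<^esub> inv\<^bsub>\<Lambda>\<^esub> l2) \<in> carrier \<Gamma>" using l12 by simp
      fix d assume d: "d \<in> carrier \<Gamma>"
      have Y: "H #>\<^bsub>\<Gamma>\<^esub> d \<in> rcosets\<^bsub>\<Gamma>\<^esub> H" using d Hc G.rcosetsI by simp
      have "(H #>\<^bsub>\<Gamma>\<^esub> d) #>\<^bsub>\<Gamma>\<^esub> \<psi> l1 = (H #>\<^bsub>\<Gamma>\<^esub> d) #>\<^bsub>\<Gamma>\<^esub> \<psi> l2"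
        using fun_cong[OF l12(4), of "H #>\<^bsub>\<Gamma>\<^esub> d"] Y by (simp add: Fmap_def)
      then have eq: "H #>\<^bsub>\<Gamma>\<^esub> (d \<otimes>\<^bsub>\<Gamma>\<^esub> \<psi> l1) = H #>\<^bsub>\<Gamma>\<^esub> (d \<otimes>\<^bsub>\<Gamma>\<^esub> \<psi> l2)"
        using d l12 Hc by (simp add: G.coset_mult_assoc)
      have c1: "d \<otimes>\<^bsub>\<Gamma>\<^esub> \<psi> l1 \<in> carrier \<Gamma>" "d \<otimes>\<^bsub>\<Gamma>\<^esub> \<psi> l2 \<in> carrier \<Gamma>" using d l12 by auto
      have "d \<otimes>\<^bsub>\<Gamma>\<^esub> \<psi> l1 \<in> H #>\<^bsub>\<Gamma>\<^esub> (d \<otimes>\<^bsub>\<Gamma>\<^esub> \<psi> l2)"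
        using G.rcos_self[OF c1(1) H(1)] eq by simp
      then have "(d \<otimes>\<^bsub>\<Gamma>\<^esub> \<psi> l1) \<otimes>\<^bsub>\<Gamma>\<^esub> inv\<^bsub>\<Gamma>\<^esub> (d \<otimes>\<^bsub>\<Gamma>\<^esub> \<psi> l2) \<in> H"
        using subgroup.rcos_module_imp[OF H(1) gG c1(2)] by simp
      moreover have "(d \<otimes>\<^bsub>\<Gamma>\<^esub> \<psi> l1) \<otimes>\<^bsub>\<Gamma>\<^esub> inv\<^bsub>\<Gamma>\<^esub> (d \<otimes>\<^bsub>\<Gamma>\<^esub> \<psi> l2)
          = d \<otimes>\<^bsub>\<Gamma>\<^esub> \<psi> (l1 \<otimes>\<^bsub>\<Lambda>\<^esub> inv\<^bsub>\<Lambda>\<^esub> l2) \<otimes>\<^bsub>\<Gamma>\<^esub> inv\<^bsub>\<Gamma>\<^esub> d"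
        using d l12 by (simp add: G.m_assoc G.inv_mult_group)
      ultimately show "d \<otimes>\<^bsub>\<Gamma>\<^esub> \<psi> (l1 \<otimes>\<^bsub>\<Lambda>\<^esub> inv\<^bsub>\<Lambda>\<^esub> l2) \<otimes>\<^bsub>\<Gamma>\<^esub> inv\<^bsub>\<Gamma>\<^esub> d \<in> H" by simp
    qed
    then have "l1 \<otimes>\<^bsub>\<Lambda>\<^esub> inv\<^bsub>\<Lambda>\<^esub> l2 = \<one>\<^bsub>\<Lambda>\<^esub>" using 1 by simp
    then have "l1 = l2" using l12 L.one_of_mult_inv by blast
    then show False using l12 by simp
  next
    case 2
    define \<iota> where "\<iota> = i1 A A (F m) fi fj"
    have \<iota>_hom: "\<iota> \<in> hom A \<Gamma>"
    proof (rule homI)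
      fix a assume "a \<in> carrier A"
      then show "\<iota> a \<in> carrier \<Gamma>" unfolding \<iota>_def \<Gamma>_def by (rule GA.i1_carr)
    next
      fix a b assume "a \<in> carrier A" "b \<in> carrier A"
      then show "\<iota> (a \<otimes>\<^bsub>A\<^esub> b) = \<iota> a \<otimes>\<^bsub>\<Gamma>\<^esub> \<iota> b" unfolding \<iota>_def \<Gamma>_def by (simp add: GA.i1_mult)
    qed
    interpret IH: group_hom A \<Gamma> \<iota> unfolding group_hom_def group_hom_axioms_def
      using gA gG \<iota>_hom by simp
    define a1 where "a1 = (0::nat, h0)"
    define a2 where "a2 = (x0, []::(nat \<times> bool) list)"
    have a1c: "a1 \<in> carrier A" using h0 p0 by (simp add: a1_def Acarr)
    have a2c: "a2 \<in> carrier A" using h0 by (simp add: a2_def Acarr free_group_def)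
    have g_core: "\<iota> a1 \<in> core"
    proof -
      have "i1 (F n) (F n) (F m) i j h0 \<in> carrier \<Lambda>" unfolding \<Lambda>_def using LA.i1_carr h0(1) by blast
      then have "\<psi> (i1 (F n) (F n) (F m) i j h0) \<in> core" using 2 by (auto simp: S_def)
      then show ?thesis using \<psi>(2) h0(1) by (simp add: \<alpha>_def \<iota>_def a1_def)
    qed
    define c where "c = \<iota> a1 \<otimes>\<^bsub>\<Gamma>\<^esub> \<iota> a2 \<otimes>\<^bsub>\<Gamma>\<^esub> inv\<^bsub>\<Gamma>\<^esub> \<iota> a1 \<otimes>\<^bsub>\<Gamma>\<^esub> inv\<^bsub>\<Gamma>\<^esub> \<iota> a2"
    have cH: "c \<in> H"
    proof -
      have g: "\<iota> a1 \<in> H" using coreD[OF g_core, of "\<one>\<^bsub>\<Gamma>\<^esub>"] core_c[OF g_core] by simp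
      have "\<iota> a2 \<otimes>\<^bsub>\<Gamma>\<^esub> \<iota> a1 \<otimes>\<^bsub>\<Gamma>\<^esub> inv\<^bsub>\<Gamma>\<^esub> \<iota> a2 \<in> H" using coreD[OF g_core] a2c by simp
      then have "inv\<^bsub>\<Gamma>\<^esub> (\<iota> a2 \<otimes>\<^bsub>\<Gamma>\<^esub> \<iota> a1 \<otimes>\<^bsub>\<Gamma>\<^esub> inv\<^bsub>\<Gamma>\<^esub> \<iota> a2) \<in> H"
        using subgroup.m_inv_closed[OF H(1)] by blast
      then have "\<iota> a2 \<otimes>\<^bsub>\<Gamma>\<^esub> inv\<^bsub>\<Gamma>\<^esub> \<iota> a1 \<otimes>\<^bsub>\<Gamma>\<^esub> inv\<^bsub>\<Gamma>\<^esub> \<iota> a2 \<in> H"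
        using a1c a2c by (simp add: G.conj_inv)
      then have "\<iota> a1 \<otimes>\<^bsub>\<Gamma>\<^esub> (\<iota> a2 \<otimes>\<^bsub>\<Gamma>\<^esub> inv\<^bsub>\<Gamma>\<^esub> \<iota> a1 \<otimes>\<^bsub>\<Gamma>\<^esub> inv\<^bsub>\<Gamma>\<^esub> \<iota> a2) \<in> H"
        using g subgroup.m_closed[OF H(1)] by blast
      then show ?thesis unfolding c_def using a1c a2c by (simp add: G.m_assoc)
    qed
    define z where "z = (\<phi> h0 x0 + (p - x0) mod p) mod p"
    have zp: "z < p" using p0 by (simp add: z_def)
    have z0: "z \<noteq> 0" unfolding z_def by (rule arith_aux[OF phc[OF h0(1,2)] h0(2,3)])
    have inv_a1: "inv\<^bsub>A\<^esub> a1 = (0, inv\<^bsub>F n\<^esub> h0)"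
    proof (rule group.inv_equality[OF gA])
      have "reduce (inv\<^bsub>F n\<^esub> h0 @ h0) = \<one>\<^bsub>F n\<^esub>"
        using group.l_inv[OF gFn h0(1)] by (simp add: free_group_def)
      then show "(0, inv\<^bsub>F n\<^esub> h0) \<otimes>\<^bsub>A\<^esub> a1 = \<one>\<^bsub>A\<^esub>"
        using h0 ph0 group.inv_closed[OF gFn h0(1)] by (simp add: a1_def Amul Aone free_group_def)
      show "a1 \<in> carrier A" by (rule a1c)
      show "(0, inv\<^bsub>F n\<^esub> h0) \<in> carrier A" using p0 group.inv_closed[OF gFn h0(1)] by (simp add: Acarr)
    qed
    have inv_a2: "inv\<^bsub>A\<^esub> a2 = ((p - x0) mod p, [])"
    proof (rule group.inv_equality[OF gA])
      show "((p - x0) mod p, []) \<otimes>\<^bsub>A\<^esub> a2 = \<one>\<^bsub>A\<^esub>"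
        using h0 ph1 by (simp add: a2_def Amul Aone mod_add_left_eq)
      show "a2 \<in> carrier A" by (rule a2c)
      show "((p - x0) mod p, []) \<in> carrier A" using p0 by (simp add: Acarr free_group_def)
    qed
    have aval: "a1 \<otimes>\<^bsub>A\<^esub> a2 \<otimes>\<^bsub>A\<^esub> inv\<^bsub>A\<^esub> a1 \<otimes>\<^bsub>A\<^esub> inv\<^bsub>A\<^esub> a2 = (z, [])"
    proof -
      have r0: "reduce (h0 @ []) = h0" using h0(1) by (simp add: free_group_def reduce_reduced)
      have r1: "reduce (h0 @ inv\<^bsub>F n\<^esub> h0) = []"
        using group.r_inv[OF gFn h0(1)] by (simp add: free_group_def)
      have s1: "a1 \<otimes>\<^bsub>A\<^esub> a2 = (\<phi> h0 x0, h0)" using r0 phc[OF h0(1,2)] by (simp add: a1_def a2_def Amul)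
      have s2: "(\<phi> h0 x0, h0) \<otimes>\<^bsub>A\<^esub> (0, inv\<^bsub>F n\<^esub> h0) = (\<phi> h0 x0, [])"
        using r1 ph0[OF h0(1)] phc[OF h0(1,2)] by (simp add: Amul)
      have s3: "(\<phi> h0 x0, []) \<otimes>\<^bsub>A\<^esub> ((p - x0) mod p, []) = (z, [])"
        using ph1[of "(p - x0) mod p"] p0 by (simp add: Amul z_def)
      show ?thesis using s1 s2 s3 inv_a1 inv_a2 by simp
    qed
    have zc: "(z, []) \<in> carrier A" using zp by (simp add: Acarr free_group_def)
    have cval: "c = \<iota> (z, [])"
    proof -
      have "\<iota> (a1 \<otimes>\<^bsub>A\<^esub> a2 \<otimes>\<^bsub>A\<^esub> inv\<^bsub>A\<^esub> a1 \<otimes>\<^bsub>A\<^esub> inv\<^bsub>A\<^esub> a2) = c"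
        using a1c a2c by (simp add: c_def)
      then show ?thesis using aval by simp
    qed
    have zpow: "(z, []) [^]\<^bsub>A\<^esub> k = ((k * z) mod p, [])" for k :: nat
    proof (induction k)
      case 0 then show ?case by (simp add: Aone)
    next
      case (Suc k)
      have "(z, []) [^]\<^bsub>A\<^esub> Suc k = ((k * z) mod p, []) \<otimes>\<^bsub>A\<^esub> (z, [])" using Suc by simp
      also have "\<dots> = ((k * z mod p + z) mod p, [])" using ph1[OF zp] by (simp add: Amul)
      also have "\<dots> = ((Suc k * z) mod p, [])" by (simp add: mod_add_left_eq add.commute mod_add_right_eq)
      finally show ?case .
    qed
    have "c [^]\<^bsub>\<Gamma>\<^esub> p = \<iota> ((z, []) [^]\<^bsub>A\<^esub> p)" using cval zc by (simp add: IH.hom_nat_pow)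
    also have "\<dots> = \<iota> \<one>\<^bsub>A\<^esub>" using zpow[of p] by (simp add: Aone)
    also have "\<dots> = \<one>\<^bsub>\<Gamma>\<^esub>" by simp
    finally have "c [^]\<^bsub>\<Gamma>\<^esub> p = \<one>\<^bsub>\<Gamma>\<^esub>" .
    then have "c = \<one>\<^bsub>\<Gamma>\<^esub>" using H(3) cH p0 by (simp add: torsion_free_def)
    then have "\<iota> (z, []) = \<iota> \<one>\<^bsub>A\<^esub>" using cval by simp
    then have "(z, []) = \<one>\<^bsub>A\<^esub>"
      unfolding \<iota>_def using i1_inj[OF gA gA gFm fi_hom fi_inj fj_hom fj_inj zc] by simp
    then show False using z0 by (simp add: Aone)
  qed
qed


end
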